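(* In the probit setting below, the posterior mode $\hat B$ satisfies $\int_{\mathbb{R}^p}\beta\,k(\hat B,\beta)\,d\beta=\hat B$.
   Context: Probit setting: covariates $X_1,\dots,X_n\in\mathbb{R}^p$, responses $Y_i\in\{0,1\}$, $X$ the $n\times p$ matrix with rows $X_i^T$; prior $\omega(\beta)\propto\exp\{-\frac12(\beta-v)^TQ(\beta-v)\}$, $Q$ positive definite or zero; posterior density $\pi(\beta)\propto\prod_i\Phi(X_i^T\beta)^{Y_i}(1-\Phi(X_i^T\beta))^{1-Y_i}\omega(\beta)$ ($\Phi$ standard normal cdf), assumed proper; it is log-concave and $\hat B$ denotes its unique maximizer. $\Sigma=X^TX+Q$. $\mathrm{TN}(\theta,1;1)$ / $\mathrm{TN}(\theta,1;0)$ denote $N(\theta,1)$ truncated to $(0,\infty)$ / $(-\infty,0)$. $k(\beta,\beta')$ is the transition density of the Albert–Chib chain, which moves from $\beta$ by drawing $Z_i\sim\mathrm{TN}(X_i^T\beta,1;Y_i)$ independently and then the new state from $N_p(\Sigma^{-1}(X^TZ+Qv),\Sigma^{-1})$. *)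

theory Defs
  imports "HOL-Probability.Probability"
begin

definition Phi :: "real \<Rightarrow> real" where
  "Phi x = (LBINT t:{..x}. std_normal_density t)"

definition tn_density :: "real \<Rightarrow> real \<Rightarrow> real \<Rightarrow> real" where
  "tn_density theta y z =
     (if y = 1 then (if z > 0 then normal_density theta 1 z / Phi theta else 0)
      else (if z < 0 then normal_density theta 1 z / (1 - Phi theta) else 0))"

text \<open>Density of N_p(m, S^{-1}) given the precision matrix S (positive definite).\<close>
definition mvn_prec_density :: "real^'p \<Rightarrow> real^'p^'p \<Rightarrow> real^'p \<Rightarrow> real" where
  "mvn_prec_density m S x =
     (2 * pi) powr (- real CARD('p) / 2) * sqrt (det S)
       * exp (- ((x - m) \<bullet> (S *v (x - m))) / 2)"

definition probit_prior :: "real^'p^'p \<Rightarrow> real^'p \<Rightarrow> real^'p \<Rightarrow> real" where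
  "probit_prior Q v beta = exp (- ((beta - v) \<bullet> (Q *v (beta - v))) / 2)"

definition probit_post :: "real^'p^'n \<Rightarrow> ('n \<Rightarrow> real) \<Rightarrow> real^'p^'p \<Rightarrow> real^'p
    \<Rightarrow> real^'p \<Rightarrow> real" where
  "probit_post X Y Q v beta =
     (\<Prod>i\<in>UNIV. Phi ((X $ i) \<bullet> beta) powr (Y i) * (1 - Phi ((X $ i) \<bullet> beta)) powr (1 - Y i))
       * probit_prior Q v beta"

definition ac_Sigma :: "real^'p^'n \<Rightarrow> real^'p^'p \<Rightarrow> real^'p^'p" where
  "ac_Sigma X Q = transpose X ** X + Q"

definition ac_kernel :: "real^'p^'n \<Rightarrow> ('n \<Rightarrow> real) \<Rightarrow> real^'p^'p \<Rightarrow> real^'p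
    \<Rightarrow> real^'p \<Rightarrow> real^'p \<Rightarrow> real" where
  "ac_kernel X Y Q v beta beta' =
     (\<integral>z. (\<Prod>i\<in>UNIV. tn_density ((X $ i) \<bullet> beta) (Y i) (z $ i))
        * mvn_prec_density (matrix_inv (ac_Sigma X Q) *v (transpose X *v z + Q *v v))
                           (ac_Sigma X Q) beta' \<partial>(lborel :: (real^'n) measure))"

definition pos_def_mat :: "real^'p^'p \<Rightarrow> bool" where
  "pos_def_mat Q \<longleftrightarrow> transpose Q = Q \<and> (\<forall>x. x \<noteq> 0 \<longrightarrow> x \<bullet> (Q *v x) > 0)"

end

theory Submission
  imports Defs "HOL-Real_Asymp.Real_Asymp"
begin

lemma basis_vec_eq: "(Basis :: (real^'n) set) = range (\<lambda>i. axis i 1)"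
  by (auto simp: Basis_vec_def)

lemma prod_Basis_vec: "(\<Prod>b\<in>(Basis :: (real^'n) set). f b) = (\<Prod>i\<in>UNIV. f (axis i 1))"
  unfolding basis_vec_eq by (subst prod.reindex) (auto intro!: inj_onI simp: axis_eq_axis)

lemma measurable_vec_lambda[measurable]:
  "(\<lambda>f. \<chi> i. f i) \<in> measurable (PiM UNIV (\<lambda>_::'n. lborel)) (borel :: (real^'n::finite) measure)"
proof -
  have *: "(\<lambda>f. (\<chi> i. f i) \<bullet> b) \<in> borel_measurable (PiM UNIV (\<lambda>_::'n. lborel))"
    if bB: "b \<in> (Basis :: (real^'n) set)" for b
  proof -
    obtain i where b: "b = axis i 1" using bB unfolding basis_vec_eq by blast
    have "(\<lambda>f. (\<chi> i. f i) \<bullet> b) = (\<lambda>f::'n \<Rightarrow> real. f i)" by (auto simp: b inner_axis)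
    then show ?thesis by simp
  qed
  show ?thesis by (subst borel_measurable_euclidean_space) (auto intro: *)
qed

lemma lborel_vec: "(lborel :: (real^'n::finite) measure) = distr (PiM UNIV (\<lambda>_. lborel)) borel (\<lambda>f. \<chi> i. f i)"
proof (rule lborel_eqI)
  fix l u :: "real^'n" assume le: "\<And>b. b \<in> Basis \<Longrightarrow> l \<bullet> b \<le> u \<bullet> b"
  have le': "\<And>i. l $ i \<le> u $ i" using le[of "axis i 1" for i] by (auto simp: basis_vec_eq inner_axis)
  interpret product_sigma_finite "\<lambda>_::'n. lborel::real measure"
    by (simp add: product_sigma_finite_def sigma_finite_lborel)
  have "(\<lambda>f. \<chi> i. f i) -` box l u \<inter> space (PiM UNIV (\<lambda>_::'n. lborel)) = PiE UNIV (\<lambda>i. {l$i<..<u$i})"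
    by (auto simp: space_PiM mem_box_cart PiE_def Pi_def extensional_def)
  then have "emeasure (distr (PiM UNIV (\<lambda>_. lborel)) borel (\<lambda>f. \<chi> i. f i)) (box l u)
      = emeasure (PiM UNIV (\<lambda>_::'n. lborel)) (PiE UNIV (\<lambda>i. {l$i<..<u$i}))"
    by (simp add: emeasure_distr)
  also have "\<dots> = (\<Prod>i\<in>UNIV. emeasure lborel {l$i<..<u$i})"
    by (rule emeasure_PiM) auto
  also have "\<dots> = (\<Prod>i\<in>UNIV. ennreal (u$i - l$i))"
    using le' by (simp add: emeasure_lborel_Ioo)
  also have "\<dots> = ennreal (\<Prod>i\<in>UNIV. u$i - l$i)"
    using le' by (simp add: prod_ennreal)
  also have "\<dots> = ennreal (\<Prod>b\<in>Basis. (u - l) \<bullet> b)"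
    by (simp add: prod_Basis_vec inner_axis)
  finally show "emeasure (distr (PiM UNIV (\<lambda>_. lborel)) borel (\<lambda>f. \<chi> i. f i)) (box l u) = (\<Prod>b\<in>Basis. (u - l) \<bullet> b)" .
qed simp


lemma psf_lborel: "product_sigma_finite (\<lambda>_::'n. lborel::real measure)"
  by (simp add: product_sigma_finite_def sigma_finite_lborel)

lemma vec_integral_transfer:
  fixes g :: "real^'n::finite \<Rightarrow> 'b::{banach, second_countable_topology}"
  assumes [measurable]: "g \<in> borel_measurable borel"
  shows "integral\<^sup>L lborel g = (\<integral>f. g (\<chi> i. f i) \<partial>PiM UNIV (\<lambda>_. lborel))"
    and "integrable lborel g \<longleftrightarrow> integrable (PiM UNIV (\<lambda>_. lborel)) (\<lambda>f. g (\<chi> i. f i))"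
proof -
  show "integral\<^sup>L lborel g = (\<integral>f. g (\<chi> i. f i) \<partial>PiM UNIV (\<lambda>_. lborel))"
    by (subst lborel_vec, subst integral_distr, auto simp: comp_def)
  show "integrable lborel g \<longleftrightarrow> integrable (PiM UNIV (\<lambda>_. lborel)) (\<lambda>f. g (\<chi> i. f i))"
    using integrable_distr_eq[of "\<lambda>f. \<chi> i. f i" "PiM UNIV (\<lambda>_. lborel)" borel g]
    by (simp add: lborel_vec[symmetric])
qed

lemma vec_nn_integral_transfer:
  fixes g :: "real^'n::finite \<Rightarrow> ennreal"
  assumes [measurable]: "g \<in> borel_measurable borel"
  shows "integral\<^sup>N lborel g = (\<integral>\<^sup>+f. g (\<chi> i. f i) \<partial>PiM UNIV (\<lambda>_. lborel))"
  by (subst lborel_vec, subst nn_integral_distr, auto)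

lemma vec_integral_prod:
  fixes g :: "'n::finite \<Rightarrow> real \<Rightarrow> real"
  assumes int: "\<And>i. integrable lborel (g i)"
  shows "integrable lborel (\<lambda>z::real^'n. \<Prod>i\<in>UNIV. g i (z$i))"
    and "(\<integral>z. (\<Prod>i\<in>UNIV. g i (z$i)) \<partial>(lborel::(real^'n) measure)) = (\<Prod>i\<in>UNIV. integral\<^sup>L lborel (g i))"
proof -
  interpret product_sigma_finite "\<lambda>_::'n. lborel::real measure" by (rule psf_lborel)
  have [measurable]: "\<And>i. g i \<in> borel_measurable borel" using int by auto
  show "integrable lborel (\<lambda>z::real^'n. \<Prod>i\<in>UNIV. g i (z$i))"
    by (subst vec_integral_transfer(2)) (auto intro!: product_integrable_prod int)
  show "(\<integral>z. (\<Prod>i\<in>UNIV. g i (z$i)) \<partial>(lborel::(real^'n) measure)) = (\<Prod>i\<in>UNIV. integral\<^sup>L lborel (g i))"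
    by (subst vec_integral_transfer(1)) (auto intro!: product_integral_prod int)
qed

lemma vec_nn_integral_prod:
  fixes g :: "'n::finite \<Rightarrow> real \<Rightarrow> ennreal"
  assumes [measurable]: "\<And>i. g i \<in> borel_measurable borel"
  shows "(\<integral>\<^sup>+z. (\<Prod>i\<in>UNIV. g i (z$i)) \<partial>(lborel::(real^'n) measure)) = (\<Prod>i\<in>UNIV. integral\<^sup>N lborel (g i))"
proof -
  interpret product_sigma_finite "\<lambda>_::'n. lborel::real measure" by (rule psf_lborel)
  show ?thesis
    by (subst vec_nn_integral_transfer) (auto intro!: product_nn_integral_prod)
qed

lemma vec_upd_eq: "(\<chi> i. (x(k := y)) i) = (\<chi> i. (x(k := 0)) i) + y *\<^sub>R axis k (1::real)"
  by (auto simp: vec_eq_iff axis_def)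

lemma vec_nn_integral_insert:
  fixes F :: "real^'n::finite \<Rightarrow> ennreal"
  assumes [measurable]: "F \<in> borel_measurable borel"
  shows "integral\<^sup>N lborel F = (\<integral>\<^sup>+x. (\<integral>\<^sup>+y. F (\<chi> i. (x(k := y)) i) \<partial>lborel) \<partial>PiM (UNIV - {k}) (\<lambda>_. lborel))"
proof -
  interpret product_sigma_finite "\<lambda>_::'n. lborel::real measure" by (rule psf_lborel)
  have U: "(UNIV::'n set) = insert k (UNIV - {k})" by auto
  show ?thesis
    apply (subst vec_nn_integral_transfer, simp)
    apply (subst U)
    apply (subst product_nn_integral_insert)
    apply auto
    done
qed

lemma shear_nn_integral:
  fixes f :: "real^'n::finite \<Rightarrow> ennreal" and c :: "real^'n \<Rightarrow> real"
  assumes [measurable]: "f \<in> borel_measurable borel" "c \<in> borel_measurable borel"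
    and inv: "\<And>x t. c (x + t *\<^sub>R axis k 1) = c x"
  shows "(\<integral>\<^sup>+x. f (x + c x *\<^sub>R axis k 1) \<partial>lborel) = integral\<^sup>N lborel f"
proof -
  have eq: "(\<integral>\<^sup>+y. f ((\<chi> i. (x(k := y)) i) + c (\<chi> i. (x(k := y)) i) *\<^sub>R axis k 1) \<partial>lborel)
      = (\<integral>\<^sup>+y. f (\<chi> i. (x(k := y)) i) \<partial>lborel)" for x :: "'n \<Rightarrow> real"
  proof -
    define c0 where "c0 = c (\<chi> i. (x(k := 0)) i)"
    have 1: "(\<chi> i. (x(k := y)) i) + c (\<chi> i. (x(k := y)) i) *\<^sub>R axis k 1 = (\<chi> i. (x(k := c0 + 1 * y)) i)" for y
      unfolding c0_def by (subst (1 2 3) vec_upd_eq) (simp add: inv algebra_simps)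
    have [measurable]: "(\<lambda>y. f (\<chi> i. (x(k := y)) i)) \<in> borel_measurable borel"
      by (subst vec_upd_eq) measurable
    show ?thesis unfolding 1
      by (subst nn_integral_real_affine[where c=1 and t=c0]) auto
  qed
  have m: "(\<lambda>x. f (x + c x *\<^sub>R axis k 1)) \<in> borel_measurable borel" by measurable
  have "(\<integral>\<^sup>+x. f (x + c x *\<^sub>R axis k 1) \<partial>lborel) = (\<integral>\<^sup>+x. (\<integral>\<^sup>+y. f ((\<chi> i. (x(k := y)) i) + c (\<chi> i. (x(k := y)) i) *\<^sub>R axis k 1) \<partial>lborel) \<partial>PiM (UNIV - {k}) (\<lambda>_. lborel))"
    by (rule vec_nn_integral_insert[OF m])
  also have "\<dots> = (\<integral>\<^sup>+x. (\<integral>\<^sup>+y. f (\<chi> i. (x(k := y)) i) \<partial>lborel) \<partial>PiM (UNIV - {k}) (\<lambda>_. lborel))"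
    by (simp only: eq)
  also have "\<dots> = integral\<^sup>N lborel f"
    by (rule vec_nn_integral_insert[symmetric]) simp
  finally show ?thesis .
qed

definition symm :: "real^'p^'p \<Rightarrow> bool" where "symm N \<longleftrightarrow> transpose N = N"
definition pdm :: "real^'p^'p \<Rightarrow> bool" where "pdm N \<longleftrightarrow> (\<forall>x. x \<noteq> 0 \<longrightarrow> 0 < x \<bullet> (N *v x))"

lemma symm_entry: "symm N \<Longrightarrow> N$i$j = N$j$i"
  unfolding symm_def by (metis transpose_def vec_lambda_beta)

lemma mv_borel[measurable]: "(\<lambda>x::real^'n::finite. N *v x) \<in> borel_measurable borel"
  by (intro borel_measurable_continuous_onI linear_continuous_on matrix_vector_mul_bounded_linear)

lemma quad_axis: "axis i 1 \<bullet> ((N::real^'n^'n) *v axis i 1) = N$i$i"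
  by (simp add: inner_axis' matrix_vector_mult_basis column_def)

lemma pdm_diag: "pdm N \<Longrightarrow> 0 < N$i$i"
  unfolding pdm_def using quad_axis[of i N] by (metis axis_eq_0_iff zero_neq_one)

lemma sqrt_prod: "finite A \<Longrightarrow> sqrt (prod f A) = (\<Prod>i\<in>A. sqrt (f i))"
  by (induction A rule: finite_induct) (auto simp: real_sqrt_mult)

lemma gauss1:
  assumes a: "0 < a"
  shows "(\<integral>\<^sup>+t. ennreal (exp (-(a * t^2)/2)) \<partial>lborel) = ennreal (sqrt (2*pi/a))"
proof -
  define s where "s = 1 / sqrt a"
  have s: "0 < s" using a by (simp add: s_def)
  have eq: "exp (-(a * t^2)/2) = sqrt (2*pi/a) * normal_density 0 s t" for t
    using a by (simp add: normal_density_def s_def real_sqrt_divide real_sqrt_mult field_simps power2_eq_square)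
  have "(\<integral>\<^sup>+t. ennreal (normal_density 0 s t) \<partial>lborel) = ennreal 1"
    using s by (subst nn_integral_eq_integral) auto
  moreover have "(\<integral>\<^sup>+t. ennreal (exp (-(a * t^2)/2)) \<partial>lborel)
     = (\<integral>\<^sup>+t. ennreal (sqrt (2*pi/a)) * ennreal (normal_density 0 s t) \<partial>lborel)"
    by (intro nn_integral_cong) (simp only: eq, rule ennreal_mult, use a in auto)
  moreover have "\<dots> = ennreal (sqrt (2*pi/a)) * (\<integral>\<^sup>+t. ennreal (normal_density 0 s t) \<partial>lborel)"
    by (rule nn_integral_cmult) simp
  ultimately show ?thesis by simp
qed

lemma gauss1':
  "0 < a \<Longrightarrow> (\<integral>\<^sup>+t. ennreal (exp (-(a * t^2 / 2))) \<partial>lborel) = ennreal (sqrt (2*pi/a))"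
  using gauss1[of a] by simp

lemma quad_diag:
  fixes N :: "real^'n^'n"
  assumes "\<And>i j. i \<noteq> j \<Longrightarrow> N$i$j = 0"
  shows "x \<bullet> (N *v x) = (\<Sum>i\<in>UNIV. N$i$i * (x$i)^2)"
proof -
  have "(N *v x)$i = N$i$i * x$i" for i
  proof -
    have "(\<Sum>j\<in>UNIV. N$i$j * x$j) = (\<Sum>j\<in>UNIV. if j = i then N$i$i * x$i else 0)"
      by (rule sum.cong) (auto simp: assms)
    then show ?thesis by (simp add: matrix_vector_mult_def)
  qed
  then show ?thesis by (simp add: inner_vec_def power2_eq_square mult_ac)
qed

lemma gauss_diag:
  fixes N :: "real^'p^'p"
  assumes off: "\<And>i j. i \<noteq> j \<Longrightarrow> N$i$j = 0" and pos: "\<And>i. 0 < N$i$i"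
  shows "(\<integral>\<^sup>+x. ennreal (exp (-(x \<bullet> (N *v x))/2)) \<partial>lborel)
       = ennreal ((2*pi) powr (real CARD('p)/2) / sqrt (det N))"
proof -
  have e: "ennreal (exp (-(x \<bullet> (N *v x))/2)) = (\<Prod>i\<in>UNIV. ennreal (exp (-(N$i$i * (x$i)^2)/2)))" for x
  proof -
    have "-(x \<bullet> (N *v x))/2 = (\<Sum>i\<in>UNIV. -(N$i$i * (x$i)^2)/2)"
    proof -
      have "(\<Sum>i\<in>UNIV. -(N$i$i * (x$i)^2)/2) = (\<Sum>i\<in>UNIV. -(N$i$i * (x$i)^2))/2"
        by (rule sum_divide_distrib[symmetric])
      also have "\<dots> = -(\<Sum>i\<in>UNIV. N$i$i * (x$i)^2)/2" by (simp only: sum_negf)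
      finally show ?thesis using quad_diag[OF off, of x] by simp
    qed
    then show ?thesis by (simp add: exp_sum prod_ennreal)
  qed
  have "(\<integral>\<^sup>+x. ennreal (exp (-(x \<bullet> (N *v x))/2)) \<partial>lborel) = (\<Prod>i\<in>UNIV. ennreal (sqrt (2*pi/N$i$i)))"
    unfolding e by (subst vec_nn_integral_prod) (auto simp: gauss1' pos)
  also have "\<dots> = ennreal (\<Prod>i\<in>UNIV. sqrt (2*pi/N$i$i))"
    by (rule prod_ennreal) (use pos in \<open>auto intro: less_imp_le\<close>)
  also have "(\<Prod>i\<in>UNIV. sqrt (2*pi/N$i$i)) = (2*pi) powr (real CARD('p)/2) / sqrt (det N)"
  proof -
    have "(\<Prod>i\<in>UNIV. sqrt (2*pi/N$i$i)) = sqrt ((2*pi)^CARD('p) / det N)"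
      by (simp add: sqrt_prod[symmetric] det_diagonal[OF off] prod_dividef prod_constant)
    also have "\<dots> = sqrt ((2*pi)^CARD('p)) / sqrt (det N)" by (simp add: real_sqrt_divide)
    also have "sqrt ((2*pi)^CARD('p)) = (2*pi) powr (real CARD('p)/2)"
    proof -
      have "sqrt ((2*pi)^CARD('p)) = ((2*pi) powr (real CARD('p))) powr (1/2)"
        by (subst powr_realpow) (auto simp: powr_half_sqrt)
      also have "\<dots> = (2*pi) powr (real CARD('p)/2)" by (simp add: powr_powr)
      finally show ?thesis .
    qed
    finally show ?thesis .
  qed
  finally show ?thesis .
qed

definition shearM :: "'p::finite \<Rightarrow> real^'p \<Rightarrow> real^'p^'p" where
  "shearM k w = (\<chi> i j. (if i = j then 1 else 0) + (if i = k then w$j else 0))"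

lemma shear_left: "(transpose (shearM k w) ** M)$i$b = M$i$b + w$i * M$k$b"
proof -
  have "(transpose (shearM k w) ** M)$i$b = (\<Sum>a\<in>UNIV. (if a = i then M$a$b else 0) + (if a = k then w$i * M$a$b else 0))"
    unfolding matrix_matrix_mult_def transpose_def shearM_def
    by (auto intro!: sum.cong simp: distrib_right)
  also have "\<dots> = M$i$b + w$i * M$k$b" by (simp add: sum.distrib)
  finally show ?thesis .
qed

lemma shear_right: "(A ** shearM k w)$i$j = A$i$j + A$i$k * w$j"
proof -
  have "(A ** shearM k w)$i$j = (\<Sum>b\<in>UNIV. (if b = j then A$i$b else 0) + (if b = k then A$i$b * w$j else 0))"
    unfolding matrix_matrix_mult_def shearM_def
    by (auto intro!: sum.cong simp: distrib_left)
  also have "\<dots> = A$i$j + A$i$k * w$j" by (simp add: sum.distrib)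
  finally show ?thesis .
qed

lemma shear_entry:
  "(transpose (shearM k w) ** M ** shearM k w)$i$j = M$i$j + w$i * M$k$j + (M$i$k + w$i * M$k$k) * w$j"
  by (simp add: shear_right shear_left algebra_simps)

lemma shear_mv: "shearM k w *v x = x + (w \<bullet> x) *\<^sub>R axis k 1"
proof -
  have "(shearM k w *v x)$j = (x + (w \<bullet> x) *\<^sub>R axis k 1)$j" for j
  proof -
    have "(shearM k w *v x)$j = (\<Sum>b\<in>UNIV. (if b = j then x$b else 0) + (if j = k then w$b * x$b else 0))"
      unfolding matrix_vector_mult_def shearM_def
      by (auto intro!: sum.cong simp: distrib_right)
    also have "\<dots> = (x + (w \<bullet> x) *\<^sub>R axis k 1)$j"
      by (simp add: sum.distrib inner_vec_def axis_def)
    finally show ?thesis .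
  qed
  then show ?thesis by (simp add: vec_eq_iff)
qed

lemma shear_det:
  fixes w :: "real^'p::finite"
  assumes wk: "w$k = 0"
  shows "det (shearM k w) = 1"
proof -
  have w: "w \<in> vec.span {row j (mat 1 :: real^'p^'p) |j. j \<noteq> k}"
  proof -
    have "w = (\<Sum>j\<in>UNIV - {k}. w$j *s row j (mat 1 :: real^'p^'p))"
    proof -
      have "w = (\<Sum>j\<in>UNIV. w$j *s axis j 1)"
        using basis_expansion[of w] by simp
      also have "\<dots> = (\<Sum>j\<in>UNIV - {k}. w$j *s axis j 1)"
        using wk by (intro sum.mono_neutral_right) auto
      also have "\<dots> = (\<Sum>j\<in>UNIV - {k}. w$j *s row j (mat 1 :: real^'p^'p))"
        by (intro sum.cong) (auto simp: row_def mat_def axis_def vec_eq_iff)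
      finally show ?thesis .
    qed
    also have "\<dots> \<in> vec.span {row j (mat 1 :: real^'p^'p) |j. j \<noteq> k}"
      by (intro vec.span_sum vec.span_scale vec.span_base) blast
    finally show ?thesis .
  qed
  have "shearM k w = (\<chi> i. if i = k then row k (mat 1) + w else row i (mat 1))"
    by (auto simp: shearM_def vec_eq_iff row_def mat_def)
  then show ?thesis using det_row_span[OF w] by simp
qed


lemma inner_transpose_mv: "x \<bullet> (transpose E *v y) = (E *v x) \<bullet> (y::real^'n)"
  by (simp add: transpose_matrix_vector inner_commute[of x] dot_lmul_matrix inner_commute[of y])

lemma gauss_step:
  fixes N :: "real^'p^'p" and k :: 'p
  assumes sN: "symm N" and pN: "pdm N"
  shows "\<exists>N'. symm N' \<and> pdm N' \<and> det N' = det N \<and> N'$k$k = N$k$k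
     \<and> (\<forall>i. i \<noteq> k \<longrightarrow> N'$i$k = 0 \<and> N'$k$i = 0)
     \<and> (\<forall>i j. i \<noteq> k \<longrightarrow> j \<noteq> k \<longrightarrow> N'$i$j = N$i$j - N$i$k * N$k$j / N$k$k)
     \<and> (\<integral>\<^sup>+x. ennreal (exp (-(x \<bullet> (N *v x))/2)) \<partial>lborel) = (\<integral>\<^sup>+x. ennreal (exp (-(x \<bullet> (N' *v x))/2)) \<partial>lborel)"
proof -
  define a where "a = N$k$k"
  have a: "0 < a" unfolding a_def by (rule pdm_diag[OF pN])
  define w :: "real^'p" where "w = (\<chi> j. if j = k then 0 else N$k$j / a)"
  define N' :: "real^'p^'p" where "N' = (\<chi> i j. if i = k \<and> j = k then a else if i = k \<or> j = k then 0
      else N$i$j - N$i$k * N$k$j / a)"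
  define E where "E = shearM k w"
  have wk: "w$k = 0" by (simp add: w_def)
  have sym: "N$i$j = N$j$i" for i j by (rule symm_entry[OF sN])
  have NE: "N = transpose E ** N' ** E"
    unfolding vec_eq_iff E_def shear_entry
    using a by (auto simp: N'_def w_def a_def field_simps sym)
  have quad: "x \<bullet> (N *v x) = (E *v x) \<bullet> (N' *v (E *v x))" for x
  proof -
    have "N *v x = transpose E *v (N' *v (E *v x))"
      by (subst NE) (simp add: matrix_vector_mul_assoc matrix_mul_assoc)
    then have "x \<bullet> (N *v x) = x \<bullet> (transpose E *v (N' *v (E *v x)))" by (simp only:)
    then show ?thesis by (simp only: inner_transpose_mv)
  qed
  have Ex: "E *v x = x + (w \<bullet> x) *\<^sub>R axis k 1" for x
    by (simp add: E_def shear_mv)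
  have sN': "symm N'"
    unfolding symm_def vec_eq_iff transpose_def N'_def by (auto simp: sym mult_ac)
  have pN': "pdm N'"
    unfolding pdm_def
  proof (intro allI impI)
    fix y :: "real^'p" assume y: "y \<noteq> 0"
    define x where "x = y - (w \<bullet> y) *\<^sub>R axis k 1"
    have wax: "w \<bullet> axis k 1 = 0" using wk by (simp add: inner_axis)
    have Exy: "E *v x = y"
      by (simp add: Ex x_def inner_diff_right wax)
    have "x \<noteq> 0" using Exy y by auto
    then have "0 < x \<bullet> (N *v x)" using pN by (simp add: pdm_def)
    then show "0 < y \<bullet> (N' *v y)" using quad[of x] Exy by simp
  qed
  have dE: "det E = 1" unfolding E_def by (rule shear_det[OF wk])
  have det: "det N' = det N"
    by (subst NE) (simp add: det_mul dE)
  have int: "(\<integral>\<^sup>+x. ennreal (exp (-(x \<bullet> (N *v x))/2)) \<partial>lborel) = (\<integral>\<^sup>+x. ennreal (exp (-(x \<bullet> (N' *v x))/2)) \<partial>lborel)"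
  proof -
    define g where "g = (\<lambda>y::real^'p. ennreal (exp (-(y \<bullet> (N' *v y))/2)))"
    have [measurable]: "g \<in> borel_measurable borel" unfolding g_def by measurable
    have "(\<integral>\<^sup>+x. ennreal (exp (-(x \<bullet> (N *v x))/2)) \<partial>lborel) = (\<integral>\<^sup>+x. g (x + (w \<bullet> x) *\<^sub>R axis k 1) \<partial>lborel)"
      by (simp add: quad g_def Ex)
    also have "\<dots> = integral\<^sup>N lborel g"
      by (rule shear_nn_integral) (auto simp: inner_add_right inner_axis wk)
    finally show ?thesis by (simp add: g_def)
  qed
  show ?thesis
    apply (rule exI[of _ N'])
    using sN' pN' det int by (auto simp: N'_def a_def)
qed

lemma gauss_ind:
  fixes K :: "'p::finite set"
  assumes "finite K"
  shows "\<forall>N::real^'p^'p. symm N \<and> pdm N \<and> (\<forall>i j. i \<noteq> j \<and> (i \<notin> K \<or> j \<notin> K) \<longrightarrow> N$i$j = 0) \<longrightarrow>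
     0 < det N \<and> (\<integral>\<^sup>+x. ennreal (exp (-(x \<bullet> (N *v x))/2)) \<partial>lborel) = ennreal ((2*pi) powr (real CARD('p)/2) / sqrt (det N))"
  using assms
proof (induction K rule: finite_induct)
  case empty
  show ?case
  proof (intro allI impI, elim conjE)
    fix N :: "real^'p^'p" assume s: "symm N" and p: "pdm N" and off: "\<forall>i j. i \<noteq> j \<and> (i \<notin> {} \<or> j \<notin> {}) \<longrightarrow> N$i$j = 0"
    have off': "\<And>i j. i \<noteq> j \<Longrightarrow> N$i$j = 0" using off by auto
    have pos: "\<And>i. 0 < N$i$i" using pdm_diag[OF p] .
    show "0 < det N \<and> (\<integral>\<^sup>+x. ennreal (exp (-(x \<bullet> (N *v x))/2)) \<partial>lborel) = ennreal ((2*pi) powr (real CARD('p)/2) / sqrt (det N))"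
      using gauss_diag[OF off' pos] by (simp add: det_diagonal[OF off'] prod_pos pos)
  qed
next
  case (insert k K)
  show ?case
  proof (intro allI impI, elim conjE)
    fix N :: "real^'p^'p" assume s: "symm N" and p: "pdm N"
      and off: "\<forall>i j. i \<noteq> j \<and> (i \<notin> insert k K \<or> j \<notin> insert k K) \<longrightarrow> N$i$j = 0"
    obtain N' where s': "symm N'" and p': "pdm N'" and d': "det N' = det N" and kk: "N'$k$k = N$k$k"
      and z: "\<forall>i. i \<noteq> k \<longrightarrow> N'$i$k = 0 \<and> N'$k$i = 0"
      and e: "\<forall>i j. i \<noteq> k \<longrightarrow> j \<noteq> k \<longrightarrow> N'$i$j = N$i$j - N$i$k * N$k$j / N$k$k"
      and int: "(\<integral>\<^sup>+x. ennreal (exp (-(x \<bullet> (N *v x))/2)) \<partial>lborel) = (\<integral>\<^sup>+x. ennreal (exp (-(x \<bullet> (N' *v x))/2)) \<partial>lborel)"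
      using gauss_step[OF s p, of k] by blast
    have off': "\<forall>i j. i \<noteq> j \<and> (i \<notin> K \<or> j \<notin> K) \<longrightarrow> N'$i$j = 0"
    proof (intro allI impI, elim conjE)
      fix i j assume ij: "i \<noteq> j" and K: "i \<notin> K \<or> j \<notin> K"
      show "N'$i$j = 0"
      proof (cases "i = k \<or> j = k")
        case True then show ?thesis using z ij by auto
      next
        case False
        then have "N'$i$j = N$i$j - N$i$k * N$k$j / N$k$k" using e by auto
        also have "\<dots> = 0" using K False ij off by auto
        finally show ?thesis .
      qed
    qed
    show "0 < det N \<and> (\<integral>\<^sup>+x. ennreal (exp (-(x \<bullet> (N *v x))/2)) \<partial>lborel) = ennreal ((2*pi) powr (real CARD('p)/2) / sqrt (det N))"
      using insert.IH s' p' off' d' int by auto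
  qed
qed

lemma gauss_pd:
  fixes S :: "real^'p^'p"
  assumes "symm S" "pdm S"
  shows "0 < det S" and "(\<integral>\<^sup>+x. ennreal (exp (-(x \<bullet> (S *v x))/2)) \<partial>lborel) = ennreal ((2*pi) powr (real CARD('p)/2) / sqrt (det S))"
  using gauss_ind[of "UNIV :: 'p set"] assms by auto

lemma lborel_distr_uminus_eucl: "distr lborel borel uminus = (lborel :: ('a::euclidean_space) measure)"
proof -
  have "(lborel :: 'a measure) = density (distr lborel borel uminus) (\<lambda>_. 1::ennreal)"
    using lborel_affine[of "-1" "0::'a"] by simp
  then show ?thesis by (simp add: density_1)
qed

lemma nn_integral_translate:
  fixes f :: "'a::euclidean_space \<Rightarrow> ennreal"
  assumes [measurable]: "f \<in> borel_measurable borel"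
  shows "integral\<^sup>N lborel f = (\<integral>\<^sup>+x. f (m + x) \<partial>lborel)"
  by (subst lborel_distr_plus[symmetric, of m]) (simp add: nn_integral_distr)

lemma integral_translate:
  fixes f :: "'a::euclidean_space \<Rightarrow> 'b::{banach, second_countable_topology}"
  assumes [measurable]: "f \<in> borel_measurable borel"
  shows "integral\<^sup>L lborel f = (\<integral>x. f (m + x) \<partial>lborel)"
    and "integrable lborel f \<longleftrightarrow> integrable lborel (\<lambda>x. f (m + x))"
proof -
  show "integral\<^sup>L lborel f = (\<integral>x. f (m + x) \<partial>lborel)"
    by (subst lborel_distr_plus[symmetric, of m]) (simp add: integral_distr)
  show "integrable lborel f \<longleftrightarrow> integrable lborel (\<lambda>x. f (m + x))"
    using integrable_distr_eq[of "(+) m" lborel borel f] by (simp add: lborel_distr_plus)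
qed

lemma integral_reflect:
  fixes f :: "'a::euclidean_space \<Rightarrow> 'b::{banach, second_countable_topology}"
  assumes [measurable]: "f \<in> borel_measurable borel"
  shows "integral\<^sup>L lborel f = (\<integral>x. f (- x) \<partial>lborel)"
  by (subst lborel_distr_uminus_eucl[symmetric]) (simp add: integral_distr)

lemma pd_lower:
  fixes S :: "real^'p^'p"
  assumes "pdm S"
  shows "\<exists>l>0. \<forall>x. l * (norm x)^2 \<le> x \<bullet> (S *v x)"
proof -
  have cont: "continuous_on UNIV (\<lambda>x::real^'p. x \<bullet> (S *v x))"
    by (intro continuous_intros linear_continuous_on matrix_vector_mul_bounded_linear)
  have ne: "sphere (0::real^'p) 1 \<noteq> {}"
    using vector_choose_size[of 1] by (auto simp: sphere_def)
  obtain u where u: "u \<in> sphere (0::real^'p) 1" and min: "\<And>y. y \<in> sphere 0 1 \<Longrightarrow> u \<bullet> (S *v u) \<le> y \<bullet> (S *v y)"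
    using continuous_attains_inf[OF compact_sphere ne continuous_on_subset[OF cont]] by blast
  have "u \<noteq> 0" using u by auto
  then have l: "0 < u \<bullet> (S *v u)" using assms by (simp add: pdm_def)
  have "u \<bullet> (S *v u) * (norm x)^2 \<le> x \<bullet> (S *v x)" for x
  proof (cases "x = 0")
    case True then show ?thesis by simp
  next
    case False
    define y where "y = (1 / norm x) *\<^sub>R x"
    have y: "y \<in> sphere 0 1" using False by (simp add: y_def)
    have x: "x = norm x *\<^sub>R y" using False by (simp add: y_def)
    have "x \<bullet> (S *v x) = (norm x)^2 * (y \<bullet> (S *v y))"
      by (subst (1 2) x) (simp add: matrix_vector_mult_scaleR power2_eq_square)
    then show ?thesis using min[OF y] mult_right_mono[of "u \<bullet> (S *v u)" "y \<bullet> (S *v y)" "(norm x)^2"] by (simp add: mult.commute)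
  qed
  then show ?thesis using l by blast
qed

lemma scaled_mv: "(l *\<^sub>R (mat 1 :: real^'p^'p)) *v x = l *\<^sub>R x"
  by (simp add: scaleR_matrix_vector_assoc[symmetric])

lemma symm_pdm_scaled: "0 < l \<Longrightarrow> symm (l *\<^sub>R (mat 1 :: real^'p^'p)) \<and> pdm (l *\<^sub>R (mat 1 :: real^'p^'p))"
  by (auto simp: symm_def pdm_def transpose_def vec_eq_iff mat_def scaled_mv[unfolded mat_def])

lemma gauss_integrable:
  fixes S :: "real^'p^'p"
  assumes "symm S" "pdm S"
  shows "integrable lborel (\<lambda>x. exp (-(x \<bullet> (S *v x))/2))"
  using has_bochner_integral_nn_integral[OF _ _ _ gauss_pd(2)[OF assms]] gauss_pd(1)[OF assms]
  by (auto simp: has_bochner_integral_iff)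

lemma mvn_borel[measurable]: "mvn_prec_density m S \<in> borel_measurable borel"
  unfolding mvn_prec_density_def[abs_def] by measurable


lemma mvn_shift: "mvn_prec_density m S (m + u) = mvn_prec_density 0 S u"
  by (simp add: mvn_prec_density_def)

lemma mvn_even: "mvn_prec_density 0 S (- u) = mvn_prec_density 0 S u"
proof -
  have "S *v (-u) = - (S *v u)" using matrix_vector_mult_scaleR[of S "-1" u] by simp
  then show ?thesis by (simp add: mvn_prec_density_def)
qed

context
  fixes S :: "real^'p^'p"
  assumes sS: "symm S" and pS: "pdm S"
begin

lemma mvn_nonneg: "0 \<le> mvn_prec_density m S x"
  using gauss_pd(1)[OF sS pS] by (simp add: mvn_prec_density_def)

lemma mvn_nn: "(\<integral>\<^sup>+x. ennreal (mvn_prec_density m S x) \<partial>lborel) = 1"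
proof -
  define c where "c = (2 * pi) powr (- real CARD('p) / 2) * sqrt (det S)"
  have d: "0 < det S" by (rule gauss_pd(1)[OF sS pS])
  have c: "0 \<le> c" using d by (simp add: c_def)
  have "(\<integral>\<^sup>+x. ennreal (mvn_prec_density m S x) \<partial>lborel) = (\<integral>\<^sup>+x. ennreal (mvn_prec_density m S (m + x)) \<partial>lborel)"
    by (rule nn_integral_translate) measurable
  also have "\<dots> = (\<integral>\<^sup>+x. ennreal c * ennreal (exp (-(x \<bullet> (S *v x))/2)) \<partial>lborel)"
  proof (intro nn_integral_cong)
    fix x :: "real^'p"
    have "mvn_prec_density m S (m + x) = c * exp (-(x \<bullet> (S *v x))/2)"
      by (simp add: mvn_shift mvn_prec_density_def c_def)
    then show "ennreal (mvn_prec_density m S (m + x)) = ennreal c * ennreal (exp (-(x \<bullet> (S *v x))/2))"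
      by (simp add: ennreal_mult c)
  qed
  also have "\<dots> = ennreal c * (\<integral>\<^sup>+x. ennreal (exp (-(x \<bullet> (S *v x))/2)) \<partial>lborel)"
    by (rule nn_integral_cmult) measurable
  also have "\<dots> = ennreal c * ennreal ((2*pi) powr (real CARD('p)/2) / sqrt (det S))"
    by (simp only: gauss_pd(2)[OF sS pS])
  finally have X: "(\<integral>\<^sup>+x. ennreal (mvn_prec_density m S x) \<partial>lborel) = ennreal c * ennreal ((2*pi) powr (real CARD('p)/2) / sqrt (det S))" .
  have E1: "c * ((2*pi) powr (real CARD('p)/2) / sqrt (det S)) = 1"
    using d by (simp add: c_def powr_minus field_simps)
  have E2: "ennreal c * ennreal ((2*pi) powr (real CARD('p)/2) / sqrt (det S)) = ennreal (c * ((2*pi) powr (real CARD('p)/2) / sqrt (det S)))"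
    by (rule ennreal_mult[symmetric]) (use c d in auto)
  have "(\<integral>\<^sup>+x. ennreal (mvn_prec_density m S x) \<partial>lborel) = ennreal (c * ((2*pi) powr (real CARD('p)/2) / sqrt (det S)))"
    using X E2 by (simp only:)
  then show ?thesis by (simp only: E1 ennreal_1)
qed

lemma mvn_int: "has_bochner_integral lborel (mvn_prec_density m S) 1"
  by (rule has_bochner_integral_nn_integral) (auto simp: mvn_nonneg mvn_nn)

lemma mvn_integrable: "integrable lborel (mvn_prec_density m S)"
  using mvn_int by (auto simp: has_bochner_integral_iff)

lemma mvn_integral: "(\<integral>x. mvn_prec_density m S x \<partial>lborel) = 1"
  using mvn_int by (auto simp: has_bochner_integral_iff)

lemma scalar_bound:
  fixes l t :: real
  assumes l: "0 < l" and t: "0 \<le> t"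
  shows "t * exp (- (l * t^2 / 2)) \<le> (1 + 4/l) * exp (- (l * t^2 / 4))"
proof -
  have e1: "1 + l * t^2 / 4 \<le> exp (l * t^2 / 4)" by (rule exp_ge_add_one_self)
  have t1: "t \<le> 1 + t^2"
  proof (cases "t \<le> 1")
    case True then show ?thesis by (simp add: add_increasing2)
  next
    case False
    then have "t * 1 \<le> t * t" by (intro mult_left_mono) auto
    then show ?thesis by (simp add: power2_eq_square)
  qed
  have eq: "(1 + 4/l) * (1 + l * t^2 / 4) = 1 + t^2 + (l * t^2 / 4 + 4 / l)"
    using l by (simp add: field_simps)
  have "0 \<le> l * t^2 / 4 + 4 / l" using l by simp
  then have "t \<le> (1 + 4/l) * (1 + l * t^2 / 4)" using t1 eq by linarith
  also have "\<dots> \<le> (1 + 4/l) * exp (l * t^2 / 4)"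
    using e1 l by (intro mult_left_mono) auto
  finally have "t \<le> (1 + 4/l) * exp (l * t^2 / 4)" .
  then have "t * exp (- (l * t^2 / 2)) \<le> (1 + 4/l) * exp (l * t^2 / 4) * exp (- (l * t^2 / 2))"
    by (rule mult_right_mono) simp
  also have "(1 + 4/l) * exp (l * t^2 / 4) * exp (- (l * t^2 / 2)) = (1 + 4/l) * exp (- (l * t^2 / 4))"
    by (simp add: mult.assoc exp_add[symmetric])
  finally show ?thesis .
qed

lemma mvn_norm0_integrable: "integrable lborel (\<lambda>x. mvn_prec_density 0 S x * norm x)"
proof -
  obtain l where l: "0 < l" and lb: "\<And>x. l * (norm x)^2 \<le> x \<bullet> (S *v x)"
    using pd_lower[OF pS] by blast
  define c where "c = (2 * pi) powr (- real CARD('p) / 2) * sqrt (det S)"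
  have c: "0 \<le> c" using gauss_pd(1)[OF sS pS] by (simp add: c_def)
  define S' where "S' = (l/2) *\<^sub>R (mat 1 :: real^'p^'p)"
  have sp: "symm S'" "pdm S'" using symm_pdm_scaled[of "l/2"] l by (auto simp: S'_def)
  have i: "integrable lborel (\<lambda>x. c * (1 + 4/l) * exp (-(x \<bullet> (S' *v x))/2))"
    using gauss_integrable[OF sp] by simp
  show ?thesis
  proof (rule Bochner_Integration.integrable_bound[OF i])
    show "(\<lambda>x. mvn_prec_density 0 S x * norm x) \<in> borel_measurable lborel" by measurable
    show "AE x in lborel. norm (mvn_prec_density 0 S x * norm x) \<le> norm (c * (1 + 4 / l) * exp (- (x \<bullet> (S' *v x)) / 2))"
    proof (rule AE_I2)
      fix x :: "real^'p"
      have q: "x \<bullet> (S' *v x) = l/2 * (norm x)^2"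
        by (simp add: S'_def scaled_mv power2_norm_eq_inner)
      have "mvn_prec_density 0 S x * norm x = c * (norm x * exp (-(x \<bullet> (S *v x))/2))"
        by (simp add: mvn_prec_density_def c_def mult_ac)
      also have "\<dots> \<le> c * (norm x * exp (- (l * (norm x)^2 / 2)))"
      proof (rule mult_left_mono[OF mult_left_mono[OF _ norm_ge_zero] c])
        show "exp (-(x \<bullet> (S *v x))/2) \<le> exp (- (l * (norm x)^2 / 2))"
          using lb[of x] by simp
      qed
      also have "\<dots> \<le> c * ((1 + 4/l) * exp (- (l * (norm x)^2 / 4)))"
        by (rule mult_left_mono[OF scalar_bound[OF l norm_ge_zero] c])
      also have "\<dots> = c * (1 + 4 / l) * exp (- (x \<bullet> (S' *v x)) / 2)"
        by (simp add: q)
      finally show "norm (mvn_prec_density 0 S x * norm x) \<le> norm (c * (1 + 4 / l) * exp (- (x \<bullet> (S' *v x)) / 2))"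
        using c l by (simp add: mvn_nonneg)
    qed
  qed
qed

end

context
  fixes S :: "real^'p^'p"
  assumes sS: "symm S" and pS: "pdm S"
begin

lemma mvn_mean:
  shows "integrable lborel (\<lambda>x. mvn_prec_density m S x *\<^sub>R x)"
    and "(\<integral>x. mvn_prec_density m S x *\<^sub>R x \<partial>lborel) = m"
proof -
  let ?g = "mvn_prec_density 0 S"
  have nn: "\<And>u. 0 \<le> ?g u" by (rule mvn_nonneg[OF sS pS])
  have i0: "integrable lborel (\<lambda>u. ?g u *\<^sub>R u)"
  proof (rule Bochner_Integration.integrable_bound[OF mvn_norm0_integrable[OF sS pS]])
    show "(\<lambda>u. ?g u *\<^sub>R u) \<in> borel_measurable lborel" by measurable
    show "AE x in lborel. norm (?g x *\<^sub>R x) \<le> norm (?g x * norm x)"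
      using nn by (auto simp: abs_mult)
  qed
  have i1: "integrable lborel (\<lambda>u. ?g u *\<^sub>R m)"
    using mvn_integrable[OF sS pS] by simp
  have eq: "mvn_prec_density m S (m + u) *\<^sub>R (m + u) = ?g u *\<^sub>R m + ?g u *\<^sub>R u" for u
    by (simp add: mvn_shift scaleR_add_right)
  have meas: "(\<lambda>x. mvn_prec_density m S x *\<^sub>R x) \<in> borel_measurable borel" by measurable
  show "integrable lborel (\<lambda>x. mvn_prec_density m S x *\<^sub>R x)"
    by (subst integral_translate(2)[OF meas, of m]) (simp add: eq i0 i1)
  have I0: "(\<integral>u. ?g u *\<^sub>R u \<partial>lborel) = 0"
  proof -
    have "(\<integral>u. ?g u *\<^sub>R u \<partial>lborel) = (\<integral>u. ?g (-u) *\<^sub>R (-u) \<partial>lborel)"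
      by (rule integral_reflect) measurable
    also have "\<dots> = - (\<integral>u. ?g u *\<^sub>R u \<partial>lborel)"
      by (simp add: mvn_even)
    finally have "(\<integral>u. ?g u *\<^sub>R u \<partial>lborel) = - (\<integral>u. ?g u *\<^sub>R u \<partial>lborel)" .
    then have "(\<integral>u. ?g u *\<^sub>R u \<partial>lborel) + (\<integral>u. ?g u *\<^sub>R u \<partial>lborel) = 0"
      by (simp only: eq_neg_iff_add_eq_0)
    then have "(2::real) *\<^sub>R (\<integral>u. ?g u *\<^sub>R u \<partial>lborel) = 0" by (simp only: scaleR_2)
    then show ?thesis by simp
  qed
  have "(\<integral>x. mvn_prec_density m S x *\<^sub>R x \<partial>lborel) = (\<integral>u. ?g u *\<^sub>R m + ?g u *\<^sub>R u \<partial>lborel)"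
    by (subst integral_translate(1)[OF meas, of m]) (simp add: eq)
  also have "\<dots> = (\<integral>u. ?g u *\<^sub>R m \<partial>lborel) + (\<integral>u. ?g u *\<^sub>R u \<partial>lborel)"
    by (rule Bochner_Integration.integral_add[OF i1 i0])
  also have "\<dots> = m"
    using I0 mvn_integral[OF sS pS, of 0] integral_scaleR_left[of m lborel "mvn_prec_density 0 S"] mvn_integrable[OF sS pS, of 0] by simp
  finally show "(\<integral>x. mvn_prec_density m S x *\<^sub>R x \<partial>lborel) = m" .
qed

definition "C0 = (\<integral>u. mvn_prec_density 0 S u * norm u \<partial>lborel)"

lemma mvn_norm:
  shows "integrable lborel (\<lambda>x. mvn_prec_density m S x * norm x)"
    and "(\<integral>x. mvn_prec_density m S x * norm x \<partial>lborel) \<le> norm m + C0"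
proof -
  let ?g = "mvn_prec_density 0 S"
  have nn: "\<And>u. 0 \<le> ?g u" by (rule mvn_nonneg[OF sS pS])
  have ih: "integrable lborel (\<lambda>u. ?g u * norm m + ?g u * norm u)"
    using mvn_integrable[OF sS pS, of 0] mvn_norm0_integrable[OF sS pS] by auto
  have le: "?g u * norm (m + u) \<le> ?g u * norm m + ?g u * norm u" for u
    using mult_left_mono[OF norm_triangle_ineq[of m u] nn[of u]] by (simp add: distrib_left)
  have meas: "(\<lambda>x. mvn_prec_density m S x * norm x) \<in> borel_measurable borel" by measurable
  have it: "integrable lborel (\<lambda>u. ?g u * norm (m + u))"
  proof (rule Bochner_Integration.integrable_bound[OF ih])
    show "(\<lambda>u. ?g u * norm (m + u)) \<in> borel_measurable lborel" by measurable
    show "AE x in lborel. norm (?g x * norm (m + x)) \<le> norm (?g x * norm m + ?g x * norm x)"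
      using le nn by (auto simp: abs_mult)
  qed
  show "integrable lborel (\<lambda>x. mvn_prec_density m S x * norm x)"
    by (subst integral_translate(2)[OF meas, of m]) (simp add: mvn_shift it)
  have "(\<integral>x. mvn_prec_density m S x * norm x \<partial>lborel) = (\<integral>u. ?g u * norm (m + u) \<partial>lborel)"
    by (subst integral_translate(1)[OF meas, of m]) (simp add: mvn_shift)
  also have "\<dots> \<le> (\<integral>u. ?g u * norm m + ?g u * norm u \<partial>lborel)"
    by (rule integral_mono[OF it ih le])
  also have "\<dots> = norm m + C0"
    using mvn_integral[OF sS pS, of 0] mvn_integrable[OF sS pS, of 0] mvn_norm0_integrable[OF sS pS]
    by (simp add: C0_def)
  finally show "(\<integral>x. mvn_prec_density m S x * norm x \<partial>lborel) \<le> norm m + C0" .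
qed

end

lemma nd_shift: "normal_density \<theta> 1 z = std_normal_density (z - \<theta>)"
  by (simp add: normal_density_def)

lemma snd_even: "std_normal_density (- u) = std_normal_density u"
  by (simp add: normal_density_def)

lemma int_ind_nd: "A \<in> sets borel \<Longrightarrow> integrable lborel (\<lambda>z. indicator A z * normal_density \<theta> 1 z)"
  using integrable_real_mult_indicator[of A lborel "normal_density \<theta> 1"] by (simp add: mult.commute)

lemma int_ind_ndz: "A \<in> sets borel \<Longrightarrow> integrable lborel (\<lambda>z. indicator A z * (z * normal_density \<theta> 1 z))"
  using integrable_real_mult_indicator[of A lborel "\<lambda>z. normal_density \<theta> 1 z * z"] integrable_normal_moment_nz_1[of 1 \<theta>]
  by (simp add: mult_ac)

lemma split0:
  fixes h :: "real \<Rightarrow> real"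
  assumes h: "integrable lborel h"
  shows "(\<integral>z. indicator {..<0} z * h z \<partial>lborel) + (\<integral>z. indicator {0<..} z * h z \<partial>lborel) = (\<integral>z. h z \<partial>lborel)"
proof -
  have [measurable]: "h \<in> borel_measurable borel" using h by auto
  have i1: "integrable lborel (\<lambda>z. indicator {..<0} z * h z)"
    using integrable_real_mult_indicator[OF _ h, of "{..<0}"] by (simp add: mult.commute)
  have i2: "integrable lborel (\<lambda>z. indicator {0<..} z * h z)"
    using integrable_real_mult_indicator[OF _ h, of "{0<..}"] by (simp add: mult.commute)
  have "(\<integral>z. indicator {..<0} z * h z \<partial>lborel) + (\<integral>z. indicator {0<..} z * h z \<partial>lborel)
      = (\<integral>z. indicator {..<0} z * h z + indicator {0<..} z * h z \<partial>lborel)"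
    by (rule Bochner_Integration.integral_add[OF i1 i2, symmetric])
  also have "\<dots> = (\<integral>z. h z \<partial>lborel)"
  proof (rule integral_cong_AE)
    show "AE x in lborel. indicator {..<0} x * h x + indicator {0<..} x * h x = h x"
      using AE_lborel_singleton[of "0::real"] by eventually_elim (auto simp: indicator_def)
  qed auto
  finally show ?thesis .
qed

lemma Phi_ge: "Phi \<theta> = (\<integral>z. indicator {0..} z * normal_density \<theta> 1 z \<partial>lborel)"
proof -
  have "Phi \<theta> = (\<integral>t. indicator {..\<theta>} t * std_normal_density t \<partial>lborel)"
    by (simp add: Phi_def set_lebesgue_integral_def)
  also have "\<dots> = \<bar>-1\<bar> *\<^sub>R (\<integral>x. indicator {..\<theta>} (\<theta> + (-1) * x) * std_normal_density (\<theta> + (-1) * x) \<partial>lborel)"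
    by (rule lborel_integral_real_affine) simp
  also have "\<dots> = (\<integral>x. indicator {..\<theta>} (\<theta> + (-1) * x) * std_normal_density (\<theta> + (-1) * x) \<partial>lborel)"
    by simp
  also have "\<dots> = (\<integral>z. indicator {0..} z * normal_density \<theta> 1 z \<partial>lborel)"
    by (intro Bochner_Integration.integral_cong) (auto simp: indicator_def normal_density_def power2_commute)
  finally show ?thesis .
qed

lemma Phi_pos_form: "Phi \<theta> = (\<integral>z. indicator {0<..} z * normal_density \<theta> 1 z \<partial>lborel)"
  unfolding Phi_ge
proof (rule integral_cong_AE)
  show "AE x in lborel. indicator {0..} x * normal_density \<theta> 1 x = indicator {0<..} x * normal_density \<theta> 1 x"
    using AE_lborel_singleton[of "0::real"] by eventually_elim (auto simp: indicator_def)
qed auto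

lemma Phi_neg_form: "1 - Phi \<theta> = (\<integral>z. indicator {..<0} z * normal_density \<theta> 1 z \<partial>lborel)"
  using split0[OF integrable_normal_density[of 1 \<theta>]] by (simp add: Phi_pos_form)

lemma pos_lower:
  fixes a b :: real
  assumes ab: "a < b" and sub: "{a<..<b} \<subseteq> A" and A: "A \<in> sets borel"
  shows "0 < (\<integral>z. indicator A z * normal_density \<theta> 1 z \<partial>lborel)"
proof -
  define R where "R = \<bar>a\<bar> + \<bar>b\<bar> + \<bar>\<theta>\<bar>"
  define c where "c = 1 / sqrt (2 * pi) * exp (- (R * R) / 2)"
  have c: "0 < c" by (simp add: c_def)
  have le: "indicator {a<..<b} z * c \<le> indicator A z * normal_density \<theta> 1 z" for z
  proof (cases "z \<in> {a<..<b}")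
    case True
    then have "\<bar>z - \<theta>\<bar> \<le> R" by (auto simp: R_def)
    then have "(z - \<theta>)^2 \<le> R * R" by (metis abs_le_square_iff abs_of_nonneg abs_ge_zero order_trans R_def abs_abs power2_eq_square)
    then have "exp (- (R * R) / 2) \<le> exp (- ((z - \<theta>)^2) / 2)" by simp
    then have cle: "c \<le> normal_density \<theta> 1 z"
      unfolding c_def normal_density_def by (simp add: divide_right_mono)
    have zA: "z \<in> A" using True sub by auto
    show ?thesis using cle True zA by (simp add: indicator_def)
  next
    case False then show ?thesis by (auto simp: indicator_def)
  qed
  have "(\<integral>z. indicator {a<..<b} z * c \<partial>lborel) \<le> (\<integral>z. indicator A z * normal_density \<theta> 1 z \<partial>lborel)"
    by (rule integral_mono[OF _ int_ind_nd[OF A] le]) (use ab in \<open>auto intro!: integrable_real_mult_indicator\<close>)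
  moreover have "(\<integral>z. indicator {a<..<b} z * c \<partial>lborel) = c * (b - a)"
    using ab by (simp add: mult.commute)
  moreover have "0 < c * (b - a)" using ab c by simp
  ultimately show ?thesis by linarith
qed

lemma Phi_pos: "0 < Phi \<theta>"
  unfolding Phi_pos_form by (rule pos_lower[of 0 1]) auto

lemma Phi_lt1: "0 < 1 - Phi \<theta>"
  unfolding Phi_neg_form by (rule pos_lower[of "-1" 0]) auto

lemma half_mean: "(\<integral>u. indicator {a<..} u * (u * std_normal_density u) \<partial>lborel) = std_normal_density a"
proof -
  let ?F = "\<lambda>u. - std_normal_density u"
  let ?f = "\<lambda>u. u * std_normal_density u"
  have "(LBINT x=ereal a..\<infinity>. ?f x) = 0 - ?F a"
  proof (rule interval_integral_FTC_integrable)
    show "ereal a < \<infinity>" by simp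
    show "(?F has_vector_derivative ?f x) (at x)" for x
    proof -
      have "((\<lambda>u. - std_normal_density u) has_real_derivative (x * std_normal_density x)) (at x)"
        unfolding std_normal_density_def
        by (auto intro!: derivative_eq_intros simp: field_simps power2_eq_square)
      then show ?thesis by (simp add: has_real_derivative_iff_has_vector_derivative)
    qed
    show "isCont ?f x" for x
      unfolding std_normal_density_def by (intro continuous_intros) simp_all
    show "set_integrable lborel (einterval (ereal a) \<infinity>) ?f"
      unfolding set_integrable_def
      using integrable_real_mult_indicator[of "einterval (ereal a) \<infinity>" lborel "\<lambda>x. std_normal_density x * x^1"]
        integrable_std_normal_moment[of 1]
      by (simp add: mult_ac)
    have "(?F \<longlongrightarrow> ?F a) (at a)"
      unfolding std_normal_density_def by (intro tendsto_intros) simp_all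
    then have "(?F \<longlongrightarrow> ?F a) (at_right a)" by (rule tendsto_within_subset) simp
    then show "((?F \<circ> real_of_ereal) \<longlongrightarrow> ?F a) (at_right (ereal a))"
      by (simp add: ereal_tendsto_simps)
    have "(?F \<longlongrightarrow> 0) at_top"
      unfolding std_normal_density_def by real_asymp
    then show "((?F \<circ> real_of_ereal) \<longlongrightarrow> 0) (at_left \<infinity>)"
      by (simp add: ereal_tendsto_simps)
  qed
  then show ?thesis
    by (simp add: interval_integral_to_infinity_eq set_lebesgue_integral_def)
qed

lemma mean_pos: "(\<integral>z. indicator {0<..} z * (z * normal_density \<theta> 1 z) \<partial>lborel) = \<theta> * Phi \<theta> + std_normal_density \<theta>"
proof -
  have i1: "integrable lborel (\<lambda>z. indicator {0<..} z * normal_density \<theta> 1 z * \<theta>)"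
    using int_ind_nd[of "{0<..}" \<theta>] by simp
  have i2: "integrable lborel (\<lambda>z. indicator {0<..} z * ((z - \<theta>) * normal_density \<theta> 1 z))"
    using integrable_real_mult_indicator[of "{0<..}" lborel "\<lambda>z. normal_density \<theta> 1 z * (z - \<theta>)^1"]
      integrable_normal_moment[of 1 \<theta> 1] by (simp add: mult_ac)
  have "(\<integral>z. indicator {0<..} z * (z * normal_density \<theta> 1 z) \<partial>lborel)
     = (\<integral>z. indicator {0<..} z * normal_density \<theta> 1 z * \<theta> + indicator {0<..} z * ((z - \<theta>) * normal_density \<theta> 1 z) \<partial>lborel)"
    by (intro Bochner_Integration.integral_cong) (auto simp: algebra_simps)
  also have "\<dots> = (\<integral>z. indicator {0<..} z * normal_density \<theta> 1 z * \<theta> \<partial>lborel) + (\<integral>z. indicator {0<..} z * ((z - \<theta>) * normal_density \<theta> 1 z) \<partial>lborel)"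
    by (rule Bochner_Integration.integral_add[OF i1 i2])
  also have "(\<integral>z. indicator {0<..} z * normal_density \<theta> 1 z * \<theta> \<partial>lborel) = \<theta> * Phi \<theta>"
    by (simp add: Phi_pos_form)
  also have "(\<integral>z. indicator {0<..} z * ((z - \<theta>) * normal_density \<theta> 1 z) \<partial>lborel)
     = \<bar>1\<bar> *\<^sub>R (\<integral>u. indicator {0<..} (\<theta> + 1 * u) * ((\<theta> + 1 * u - \<theta>) * normal_density \<theta> 1 (\<theta> + 1 * u)) \<partial>lborel)"
    by (rule lborel_integral_real_affine) simp
  also have "\<dots> = (\<integral>u. indicator {0<..} (\<theta> + 1 * u) * ((\<theta> + 1 * u - \<theta>) * normal_density \<theta> 1 (\<theta> + 1 * u)) \<partial>lborel)"
    by simp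
  also have "\<dots> = (\<integral>u. indicator {-\<theta><..} u * (u * std_normal_density u) \<partial>lborel)"
  proof (intro Bochner_Integration.integral_cong refl)
    fix u :: real
    have "indicator {0<..} (\<theta> + 1 * u) = (indicator {-\<theta><..} u :: real)" by (simp add: indicator_def)
    moreover have "normal_density \<theta> 1 (\<theta> + 1 * u) = std_normal_density u" by (simp add: normal_density_def)
    ultimately show "indicator {0<..} (\<theta> + 1 * u) * ((\<theta> + 1 * u - \<theta>) * normal_density \<theta> 1 (\<theta> + 1 * u)) = indicator {-\<theta><..} u * (u * std_normal_density u)"
      by simp
  qed
  also have "\<dots> = std_normal_density \<theta>"
    using half_mean[of "-\<theta>"] snd_even[of \<theta>] by simp
  finally show ?thesis .
qed

lemma mean_neg: "(\<integral>z. indicator {..<0} z * (z * normal_density \<theta> 1 z) \<partial>lborel) = \<theta> * (1 - Phi \<theta>) - std_normal_density \<theta>"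
proof -
  have "(\<integral>z. indicator {..<0} z * (z * normal_density \<theta> 1 z) \<partial>lborel) + (\<integral>z. indicator {0<..} z * (z * normal_density \<theta> 1 z) \<partial>lborel) = \<theta>"
    using split0[OF integrable_normal_moment_nz_1[of 1 \<theta>]] integral_normal_moment_nz_1[of 1 \<theta>]
    by (simp add: mult_ac)
  then show ?thesis using mean_pos[of \<theta>] by (simp add: algebra_simps)
qed

lemma Phi_split:
  assumes ab: "a \<le> b"
  shows "Phi b = Phi a + (\<integral>t. indicator {a<..<b} t * std_normal_density t \<partial>lborel)"
proof -
  have i: "integrable lborel (\<lambda>t. indicator A t * std_normal_density t)" if "A \<in> sets borel" for A :: "real set"
    using int_ind_nd[OF that, of 0] by simp
  have "Phi b = (\<integral>t. indicator {..b} t * std_normal_density t \<partial>lborel)"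
    by (simp add: Phi_def set_lebesgue_integral_def)
  also have "\<dots> = (\<integral>t. indicator {..a} t * std_normal_density t + indicator {a<..<b} t * std_normal_density t \<partial>lborel)"
  proof (rule integral_cong_AE)
    show "AE x in lborel. indicator {..b} x * std_normal_density x = indicator {..a} x * std_normal_density x + indicator {a<..<b} x * std_normal_density x"
      using AE_lborel_singleton[of b] by eventually_elim (use ab in \<open>auto simp: indicator_def\<close>)
  qed auto
  also have "\<dots> = (\<integral>t. indicator {..a} t * std_normal_density t \<partial>lborel) + (\<integral>t. indicator {a<..<b} t * std_normal_density t \<partial>lborel)"
    by (rule Bochner_Integration.integral_add[OF i i]) auto
  also have "(\<integral>t. indicator {..a} t * std_normal_density t \<partial>lborel) = Phi a"
    by (simp add: Phi_def set_lebesgue_integral_def)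
  finally show ?thesis .
qed

lemma Phi_interval: "Phi u = Phi x + (LBINT t=ereal x..ereal u. std_normal_density t)"
proof (cases "x \<le> u")
  case True
  then show ?thesis
    by (simp add: Phi_split[OF True] interval_integral_Ioo set_lebesgue_integral_def)
next
  case False
  then have ux: "u \<le> x" by simp
  have "(LBINT t=ereal x..ereal u. std_normal_density t) = - (LBINT t=ereal u..ereal x. std_normal_density t)"
    by (rule interval_integral_endpoints_reverse)
  then show ?thesis
    by (simp add: Phi_split[OF ux] interval_integral_Ioo[of u x] ux set_lebesgue_integral_def)
qed

lemma DERIV_Phi: "(Phi has_real_derivative std_normal_density x) (at x)"
proof -
  let ?G = "\<lambda>u. LBINT t=ereal x..ereal u. std_normal_density t"
  have c: "continuous_on {x-1..x+1} std_normal_density"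
    unfolding std_normal_density_def by (intro continuous_intros) simp_all
  have "(?G has_vector_derivative std_normal_density x) (at x within {x-1..x+1})"
    by (rule interval_integral_FTC2[OF _ _ c]) auto
  then have "(?G has_vector_derivative std_normal_density x) (at x within {x-1<..<x+1})"
    by (rule has_vector_derivative_within_subset) auto
  then have "(?G has_vector_derivative std_normal_density x) (at x)"
    by (subst (asm) has_vector_derivative_within_open) auto
  then have "((\<lambda>u. Phi x + ?G u) has_real_derivative std_normal_density x) (at x)"
    by (auto intro!: derivative_eq_intros simp: has_real_derivative_iff_has_vector_derivative[symmetric])
  moreover have "(\<lambda>u. Phi x + ?G u) = Phi"
    by (rule ext) (simp add: Phi_interval[symmetric])
  ultimately show ?thesis by simp
qed

lemma isCont_Phi: "isCont Phi x"
  using DERIV_Phi DERIV_isCont by blast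

lemma Phi_borel[measurable]: "Phi \<in> borel_measurable borel"
  by (intro borel_measurable_continuous_onI continuous_at_imp_continuous_on ballI isCont_Phi)

definition rr :: "real \<Rightarrow> real \<Rightarrow> real" where
  "rr \<theta> y = (if y = 1 then std_normal_density \<theta> / Phi \<theta> else - (std_normal_density \<theta> / (1 - Phi \<theta>)))"

lemma tn_borel[measurable]: "tn_density \<theta> y \<in> borel_measurable borel"
  unfolding tn_density_def[abs_def] by measurable

lemma tn_nonneg: "0 \<le> tn_density \<theta> y z"
  using Phi_pos[of \<theta>] Phi_lt1[of \<theta>] by (simp add: tn_density_def)

lemma tn_eq: "tn_density \<theta> y z = (if y = 1 then indicator {0<..} z * normal_density \<theta> 1 z / Phi \<theta>
   else indicator {..<0} z * normal_density \<theta> 1 z / (1 - Phi \<theta>))"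
  by (simp add: tn_density_def indicator_def)

lemma tn_int: "integrable lborel (tn_density \<theta> y)" "(\<integral>z. tn_density \<theta> y z \<partial>lborel) = 1"
proof -
  have P: "Phi \<theta> \<noteq> 0" "1 - Phi \<theta> \<noteq> 0" using Phi_pos[of \<theta>] Phi_lt1[of \<theta>] by auto
  show "integrable lborel (tn_density \<theta> y)"
    unfolding tn_eq[abs_def]
    using int_ind_nd[of "{0<..}" \<theta>] int_ind_nd[of "{..<0}" \<theta>] by (cases "y = 1") auto
  show "(\<integral>z. tn_density \<theta> y z \<partial>lborel) = 1"
  proof (cases "y = 1")
    case True
    have "(\<integral>z. tn_density \<theta> y z \<partial>lborel) = (\<integral>z. indicator {0<..} z * normal_density \<theta> 1 z / Phi \<theta> \<partial>lborel)"
      by (rule Bochner_Integration.integral_cong) (simp_all add: tn_eq True)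
    also have "\<dots> = (\<integral>z. indicator {0<..} z * normal_density \<theta> 1 z \<partial>lborel) / Phi \<theta>"
      by (rule integral_divide_zero)
    also have "\<dots> = 1" using P by (simp only: Phi_pos_form[symmetric]) simp
    finally show ?thesis .
  next
    case False
    have "(\<integral>z. tn_density \<theta> y z \<partial>lborel) = (\<integral>z. indicator {..<0} z * normal_density \<theta> 1 z / (1 - Phi \<theta>) \<partial>lborel)"
      by (rule Bochner_Integration.integral_cong) (simp_all add: tn_eq False)
    also have "\<dots> = (\<integral>z. indicator {..<0} z * normal_density \<theta> 1 z \<partial>lborel) / (1 - Phi \<theta>)"
      by (rule integral_divide_zero)
    also have "\<dots> = 1" using P by (simp only: Phi_neg_form[symmetric]) simp
    finally show ?thesis .
  qed
qed

lemma tn_mean: "integrable lborel (\<lambda>z. z * tn_density \<theta> y z)" "(\<integral>z. z * tn_density \<theta> y z \<partial>lborel) = \<theta> + rr \<theta> y"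
proof -
  have P: "Phi \<theta> \<noteq> 0" "1 - Phi \<theta> \<noteq> 0" using Phi_pos[of \<theta>] Phi_lt1[of \<theta>] by auto
  have eq: "z * tn_density \<theta> y z = (if y = 1 then indicator {0<..} z * (z * normal_density \<theta> 1 z) / Phi \<theta>
     else indicator {..<0} z * (z * normal_density \<theta> 1 z) / (1 - Phi \<theta>))" for z
    by (simp add: tn_eq)
  show "integrable lborel (\<lambda>z. z * tn_density \<theta> y z)"
    unfolding eq using int_ind_ndz[of "{0<..}" \<theta>] int_ind_ndz[of "{..<0}" \<theta>] by (cases "y = 1") auto
  show "(\<integral>z. z * tn_density \<theta> y z \<partial>lborel) = \<theta> + rr \<theta> y"
  proof (cases "y = 1")
    case True
    have "(\<integral>z. z * tn_density \<theta> y z \<partial>lborel) = (\<integral>z. indicator {0<..} z * (z * normal_density \<theta> 1 z) / Phi \<theta> \<partial>lborel)"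
      by (rule Bochner_Integration.integral_cong) (simp_all add: tn_eq True)
    also have "\<dots> = (\<integral>z. indicator {0<..} z * (z * normal_density \<theta> 1 z) \<partial>lborel) / Phi \<theta>"
      by (rule integral_divide_zero)
    also have "\<dots> = \<theta> + rr \<theta> y" using P True by (simp only: mean_pos) (simp add: rr_def field_simps)
    finally show ?thesis .
  next
    case False
    have "(\<integral>z. z * tn_density \<theta> y z \<partial>lborel) = (\<integral>z. indicator {..<0} z * (z * normal_density \<theta> 1 z) / (1 - Phi \<theta>) \<partial>lborel)"
      by (rule Bochner_Integration.integral_cong) (simp_all add: tn_eq False)
    also have "\<dots> = (\<integral>z. indicator {..<0} z * (z * normal_density \<theta> 1 z) \<partial>lborel) / (1 - Phi \<theta>)"
      by (rule integral_divide_zero)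
    also have "\<dots> = \<theta> + rr \<theta> y" using P False by (simp only: mean_neg) (simp add: rr_def field_simps)
    finally show ?thesis .
  qed
qed

lemma tn_abs: "integrable lborel (\<lambda>z. \<bar>z\<bar> * tn_density \<theta> y z)"
proof -
  have "integrable lborel (\<lambda>z. \<bar>z * tn_density \<theta> y z\<bar>)"
    using tn_mean(1) by (rule integrable_abs)
  then show ?thesis using tn_nonneg by (simp add: abs_mult)
qed

definition hh :: "real \<Rightarrow> real \<Rightarrow> real" where
  "hh y a = (if y = 1 then Phi a else 1 - Phi a)"

lemma hh_pos: "0 < hh y a"
  using Phi_pos[of a] Phi_lt1[of a] by (simp add: hh_def)

lemma lik_factor: "y \<in> {0, 1} \<Longrightarrow> Phi a powr y * (1 - Phi a) powr (1 - y) = hh y a"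
  using Phi_pos[of a] Phi_lt1[of a] by (auto simp: hh_def)

lemma post_eq:
  assumes Y01: "\<forall>i. Y i \<in> {0, 1}"
  shows "probit_post X Y Q v \<beta> = (\<Prod>i\<in>UNIV. hh (Y i) (X$i \<bullet> \<beta>)) * exp (-((\<beta> - v) \<bullet> (Q *v (\<beta> - v)))/2)"
  unfolding probit_post_def probit_prior_def using Y01 by (simp add: lik_factor)

lemma post_pos: "\<forall>i. Y i \<in> {0, 1} \<Longrightarrow> 0 < probit_post X Y Q v \<beta>"
  by (simp add: post_eq prod_pos hh_pos)

lemma DERIV_hh: "(hh y has_real_derivative (hh y a * rr a y)) (at a)"
proof -
  have "(hh y has_real_derivative (if y = 1 then std_normal_density a else - std_normal_density a)) (at a)"
  proof (cases "y = 1")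
    case True
    then show ?thesis using DERIV_Phi[of a] by (simp add: hh_def[abs_def])
  next
    case False
    then show ?thesis using DERIV_Phi[of a] by (auto simp: hh_def[abs_def] intro!: derivative_eq_intros)
  qed
  moreover have "(if y = 1 then std_normal_density a else - std_normal_density a) = hh y a * rr a y"
    using Phi_pos[of a] Phi_lt1[of a] by (simp add: hh_def rr_def)
  ultimately show ?thesis by simp
qed

lemma DERIV_ln_hh: "((\<lambda>t. ln (hh y (a + t * c))) has_real_derivative (c * rr a y)) (at 0)"
proof -
  have d1: "((\<lambda>t. a + t * c) has_real_derivative c) (at 0)"
    by (auto intro!: derivative_eq_intros)
  have "((\<lambda>t. hh y (a + t * c)) has_real_derivative (hh y a * rr a y * c)) (at 0)"
    using DERIV_chain2[OF _ d1, of "hh y" "hh y a * rr a y"] DERIV_hh[of y a] by simp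
  then have "((\<lambda>t. ln (hh y (a + t * c))) has_real_derivative (1 / hh y (a + 0 * c) * (hh y a * rr a y * c))) (at 0)"
    by (rule DERIV_ln_divide[THEN DERIV_chain2, rotated]) (simp add: hh_pos)
  then show ?thesis using hh_pos[of y a] by (simp add: field_simps)
qed

lemma mv_scaleR: "(A::real^'m^'n) *v (c *\<^sub>R x) = c *\<^sub>R (A *v x)"
  by (simp add: vec_eq_iff matrix_vector_mult_def sum_distrib_left mult_ac)

lemma quad_expand:
  fixes Q :: "real^'n^'n"
  shows "(w + t *\<^sub>R e) \<bullet> (Q *v (w + t *\<^sub>R e)) = w \<bullet> (Q *v w) + t * (e \<bullet> (Q *v w) + w \<bullet> (Q *v e)) + t^2 * (e \<bullet> (Q *v e))"
  by (simp add: matrix_vector_right_distrib mv_scaleR inner_add_left inner_add_right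
      algebra_simps power2_eq_square)

lemma foc:
  fixes X :: "real^'p^'n" and Q :: "real^'p^'p"
  assumes Y01: "\<forall>i. Y i \<in> {0, 1}" and symQ: "transpose Q = Q"
    and mode: "\<forall>beta. probit_post X Y Q v beta \<le> probit_post X Y Q v B"
  shows "transpose X *v (\<chi> i. rr (X$i \<bullet> B) (Y i)) = Q *v (B - v)"
proof -
  have "(transpose X *v (\<chi> i. rr (X$i \<bullet> B) (Y i)))$j = (Q *v (B - v))$j" for j
  proof -
    define e :: "real^'p" where "e = axis j 1"
    define w where "w = B - v"
    define F where "F = (\<lambda>t. (\<Sum>i\<in>UNIV. ln (hh (Y i) (X$i \<bullet> B + t * X$i$j)))
        - (w \<bullet> (Q *v w) + t * (e \<bullet> (Q *v w) + w \<bullet> (Q *v e)) + t^2 * (e \<bullet> (Q *v e)))/2)"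
    have Fpost: "F t = ln (probit_post X Y Q v (B + t *\<^sub>R e))" for t
    proof -
      have eq1: "B + t *\<^sub>R e - v = w + t *\<^sub>R e" by (simp add: w_def algebra_simps)
      have "X$i \<bullet> (B + t *\<^sub>R e) = X$i \<bullet> B + t * X$i$j" for i
        by (simp add: e_def inner_add_right inner_axis)
      then show ?thesis
        unfolding post_eq[OF Y01] F_def eq1
        by (simp add: ln_mult prod_pos hh_pos ln_prod quad_expand[symmetric] less_imp_neq[OF hh_pos, symmetric])
    qed
    have le: "F t \<le> F 0" for t
    proof -
      have "probit_post X Y Q v (B + t *\<^sub>R e) \<le> probit_post X Y Q v (B + 0 *\<^sub>R e)" using mode by simp
      then show ?thesis unfolding Fpost by (subst ln_le_cancel_iff) (auto intro: post_pos[OF Y01])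
    qed
    have "(F has_real_derivative ((\<Sum>i\<in>UNIV. X$i$j * rr (X$i \<bullet> B) (Y i)) - (e \<bullet> (Q *v w) + w \<bullet> (Q *v e))/2)) (at 0)"
    proof -
      have d1: "((\<lambda>t. \<Sum>i\<in>UNIV. ln (hh (Y i) (X$i \<bullet> B + t * X$i$j))) has_real_derivative (\<Sum>i\<in>UNIV. X$i$j * rr (X$i \<bullet> B) (Y i))) (at 0)"
        by (rule DERIV_sum) (rule DERIV_ln_hh)
      have d2: "((\<lambda>t. (w \<bullet> (Q *v w) + t * (e \<bullet> (Q *v w) + w \<bullet> (Q *v e)) + t^2 * (e \<bullet> (Q *v e)))/2) has_real_derivative ((e \<bullet> (Q *v w) + w \<bullet> (Q *v e))/2)) (at 0)"
        by (auto intro!: derivative_eq_intros)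
      show ?thesis unfolding F_def by (rule DERIV_diff[OF d1 d2])
    qed
    then have "(\<Sum>i\<in>UNIV. X$i$j * rr (X$i \<bullet> B) (Y i)) - (e \<bullet> (Q *v w) + w \<bullet> (Q *v e))/2 = 0"
      by (rule DERIV_local_max[where d=1]) (auto intro: le)
    moreover have "w \<bullet> (Q *v e) = e \<bullet> (Q *v w)"
      using inner_transpose_mv[of w Q e] symQ by (simp add: inner_commute)
    moreover have "e \<bullet> (Q *v w) = (Q *v (B - v))$j"
      by (simp add: e_def w_def inner_axis')
    moreover have "(transpose X *v (\<chi> i. rr (X$i \<bullet> B) (Y i)))$j = (\<Sum>i\<in>UNIV. X$i$j * rr (X$i \<bullet> B) (Y i))"
      by (simp add: matrix_vector_mult_def transpose_def)
    ultimately show ?thesis by simp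
  qed
  then show ?thesis by (simp add: vec_eq_iff)
qed

lemma vec_nth_borel[measurable]: "(\<lambda>x::real^'n. x $ k) \<in> borel_measurable borel"
  by (intro borel_measurable_continuous_onI linear_continuous_on bounded_linear_vec_nth)

lemma multi_shear:
  fixes u :: "real^'n::finite"
  assumes "finite J"
  shows "k \<notin> J \<Longrightarrow> \<forall>f::real^'n \<Rightarrow> ennreal. f \<in> borel_measurable borel \<longrightarrow>
    (\<integral>\<^sup>+x. f (x + (x$k) *\<^sub>R (\<Sum>j\<in>J. u$j *\<^sub>R axis j 1)) \<partial>lborel) = integral\<^sup>N lborel f"
  using assms
proof (induction J rule: finite_induct)
  case empty
  then show ?case by simp
next
  case (insert j J)
  show ?case
  proof (intro allI impI)
    fix f :: "real^'n \<Rightarrow> ennreal" assume [measurable]: "f \<in> borel_measurable borel"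
    have jk: "j \<noteq> k" and kJ: "k \<notin> J" using insert.prems by auto
    define g where "g = (\<lambda>y::real^'n. f (y + (y$k) *\<^sub>R (\<Sum>i\<in>J. u$i *\<^sub>R axis i 1)))"
    have [measurable]: "g \<in> borel_measurable borel" unfolding g_def by measurable
    have eq: "f (x + (x$k) *\<^sub>R (\<Sum>i\<in>insert j J. u$i *\<^sub>R axis i 1)) = g (x + (x$k * u$j) *\<^sub>R axis j 1)" for x
    proof -
      have axk: "axis j 1 $ k = (0::real)" using jk by (simp add: axis_def)
      show ?thesis
        using insert.hyps by (simp add: g_def scaleR_add_right algebra_simps axk)
    qed
    have "(\<integral>\<^sup>+x. f (x + (x$k) *\<^sub>R (\<Sum>i\<in>insert j J. u$i *\<^sub>R axis i 1)) \<partial>lborel)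
        = (\<integral>\<^sup>+x. g (x + (x$k * u$j) *\<^sub>R axis j 1) \<partial>lborel)"
      by (simp add: eq)
    also have "\<dots> = integral\<^sup>N lborel g"
      by (rule shear_nn_integral) (use jk in \<open>auto simp: axis_def\<close>)
    also have "\<dots> = integral\<^sup>N lborel f"
      using insert.IH[OF kJ] unfolding g_def by simp
    finally show "(\<integral>\<^sup>+x. f (x + (x$k) *\<^sub>R (\<Sum>i\<in>insert j J. u$i *\<^sub>R axis i 1)) \<partial>lborel) = integral\<^sup>N lborel f" .
  qed
qed

lemma nn_infinite:
  fixes L :: "real^'p \<Rightarrow> real" and d :: "real^'p"
  assumes [measurable]: "L \<in> borel_measurable borel" and pos: "\<And>x. 0 < L x"
    and dk: "d$k \<noteq> 0" and inv: "\<And>x t. L (x + t *\<^sub>R d) = L x"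
  shows "(\<integral>\<^sup>+x. ennreal (L x) \<partial>lborel) = \<infinity>"
proof -
  define u where "u = (1 / d$k) *\<^sub>R d - axis k 1"
  have uk: "u$k = 0" using dk by (simp add: u_def axis_def)
  have usum: "(\<Sum>j\<in>UNIV - {k}. u$j *\<^sub>R axis j 1) = u"
  proof -
    have "u = (\<Sum>j\<in>UNIV. u$j *\<^sub>R axis j 1)"
      using basis_expansion[of u] by (simp add: scalar_mult_eq_scaleR)
    also have "\<dots> = (\<Sum>j\<in>UNIV - {k}. u$j *\<^sub>R axis j 1)"
      using uk by (intro sum.mono_neutral_right) auto
    finally show ?thesis by simp
  qed
  have "(\<integral>\<^sup>+x. ennreal (L x) \<partial>lborel) = (\<integral>\<^sup>+x. ennreal (L (x + (x$k) *\<^sub>R (\<Sum>j\<in>UNIV - {k}. u$j *\<^sub>R axis j 1))) \<partial>lborel)"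
  proof -
    have m: "(\<lambda>x. ennreal (L x)) \<in> borel_measurable borel" by measurable
    show ?thesis
      using mp[OF spec[OF multi_shear[of "UNIV - {k}" k u], of "\<lambda>x. ennreal (L x)"] m] by simp
  qed
  also have "\<dots> = (\<integral>\<^sup>+x. ennreal (L (x - (x$k) *\<^sub>R axis k 1)) \<partial>lborel)"
  proof (intro nn_integral_cong)
    fix x :: "real^'p"
    have eq': "x + (x$k) *\<^sub>R u = (x - (x$k) *\<^sub>R axis k 1) + (x$k / d$k) *\<^sub>R d"
      by (simp add: u_def algebra_simps)
    show "ennreal (L (x + (x$k) *\<^sub>R (\<Sum>j\<in>UNIV - {k}. u$j *\<^sub>R axis j 1))) = ennreal (L (x - (x$k) *\<^sub>R axis k 1))"
      by (simp only: usum eq' inv)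
  qed
  also have "\<dots> = (\<integral>\<^sup>+x. (\<integral>\<^sup>+y. ennreal (L ((\<chi> i. (x(k := y)) i) - ((\<chi> i. (x(k := y)) i)$k) *\<^sub>R axis k 1)) \<partial>lborel) \<partial>PiM (UNIV - {k}) (\<lambda>_. lborel))"
    by (rule vec_nn_integral_insert) measurable
  also have "\<dots> = (\<integral>\<^sup>+x. \<infinity> \<partial>PiM (UNIV - {k}) (\<lambda>_. lborel :: real measure))"
  proof (rule nn_integral_cong)
    fix x :: "'p \<Rightarrow> real"
    have "(\<integral>\<^sup>+y. ennreal (L ((\<chi> i. (x(k := y)) i) - ((\<chi> i. (x(k := y)) i)$k) *\<^sub>R axis k 1)) \<partial>lborel)
        = (\<integral>\<^sup>+y. ennreal (L (\<chi> i. (x(k := 0)) i)) \<partial>(lborel::real measure))"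
    proof (intro nn_integral_cong)
      fix y :: real
      have "(\<chi> i. (x(k := y)) i) - ((\<chi> i. (x(k := y)) i)$k) *\<^sub>R axis k 1 = (\<chi> i. (x(k := 0)) i)"
        by (auto simp: vec_eq_iff axis_def)
      then show "ennreal (L ((\<chi> i. (x(k := y)) i) - ((\<chi> i. (x(k := y)) i)$k) *\<^sub>R axis k 1)) = ennreal (L (\<chi> i. (x(k := 0)) i))"
        by (simp only:)
    qed
    also have "\<dots> = ennreal (L (\<chi> i. (x(k := 0)) i)) * \<infinity>"
      by (simp add: emeasure_lborel_UNIV)
    also have "\<dots> = \<infinity>" using pos[of "\<chi> i. (x(k := 0)) i"] by simp
    finally show "(\<integral>\<^sup>+y. ennreal (L ((\<chi> i. (x(k := y)) i) - ((\<chi> i. (x(k := y)) i)$k) *\<^sub>R axis k 1)) \<partial>lborel) = \<infinity>" .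
  qed
  also have "\<dots> = \<infinity>"
  proof -
    interpret product_sigma_finite "\<lambda>_::'p. lborel::real measure" by (rule psf_lborel)
    have "emeasure (PiM (UNIV - {k}) (\<lambda>_::'p. lborel::real measure)) (space (PiM (UNIV - {k}) (\<lambda>_. lborel))) \<noteq> 0"
    proof -
      have "space (PiM (UNIV - {k}) (\<lambda>_::'p. lborel::real measure)) = PiE (UNIV - {k}) (\<lambda>_. UNIV)"
        by (simp add: space_PiM)
      moreover have "emeasure (PiM (UNIV - {k}) (\<lambda>_::'p. lborel::real measure)) (PiE (UNIV - {k}) (\<lambda>_. UNIV)) = (\<Prod>i\<in>UNIV - {k}. emeasure lborel (UNIV::real set))"
        by (rule emeasure_PiM) auto
      ultimately show ?thesis by (simp add: emeasure_lborel_UNIV top_power_ennreal)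
    qed
    then show ?thesis by (simp add: nn_integral_const ennreal_top_mult_left mult.commute)
  qed
  finally show ?thesis .
qed

lemma mv_borel_raw[measurable (raw)]:
  "f \<in> borel_measurable M \<Longrightarrow> (\<lambda>x. (N::real^'m^'n) *v f x) \<in> borel_measurable M"
  using measurable_compose[OF _ mv_borel] by blast

lemma vec_nth_borel_raw[measurable (raw)]:
  "f \<in> borel_measurable M \<Longrightarrow> (\<lambda>x. (f x :: real^'n) $ k) \<in> borel_measurable M"
  using measurable_compose[OF _ vec_nth_borel] by blast

lemma post_borel[measurable]: "probit_post X Y Q v \<in> borel_measurable borel"
  unfolding probit_post_def[abs_def] probit_prior_def by measurable

lemma matrix_inv_left:
  fixes A :: "real^'n^'n"
  assumes "det A \<noteq> 0"
  shows "matrix_inv A ** A = mat 1"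
proof -
  have "invertible A" using assms by (simp add: invertible_det_nz)
  then have "\<exists>A'. A ** A' = mat 1 \<and> A' ** A = mat 1" by (simp add: invertible_def)
  then show ?thesis unfolding matrix_inv_def by (rule someI2_ex) simp
qed

lemma transpose_add: "transpose (A + B) = transpose A + (transpose B :: real^'n^'n)"
  by (simp add: transpose_def vec_eq_iff)

lemma row_inner: "(X::real^'p^'n) $ i \<bullet> x = (X *v x) $ i"
  by (simp add: inner_vec_def matrix_vector_mult_def mult.commute)

lemma Sigma_quad:
  fixes X :: "real^'p^'n" and Q :: "real^'p^'p"
  shows "x \<bullet> (ac_Sigma X Q *v x) = (X *v x) \<bullet> (X *v x) + x \<bullet> (Q *v x)"
proof -
  have e: "ac_Sigma X Q *v x = transpose X *v (X *v x) + Q *v x"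
    by (simp add: ac_Sigma_def matrix_vector_mult_add_rdistrib matrix_vector_mul_assoc)
  show ?thesis by (simp only: e inner_add_right inner_transpose_mv)
qed

lemma Sigma_sp:
  fixes X :: "real^'p^'n" and Q :: "real^'p^'p"
  assumes Y01: "\<forall>i. Y i \<in> {0, 1}" and Q: "pos_def_mat Q \<or> Q = 0"
    and proper: "integrable lborel (probit_post X Y Q v)"
  shows "symm (ac_Sigma X Q)" "pdm (ac_Sigma X Q)" "transpose Q = Q"
proof -
  show symQ: "transpose Q = Q" using Q by (auto simp: pos_def_mat_def transpose_def vec_eq_iff)
  show "symm (ac_Sigma X Q)"
    by (simp add: symm_def ac_Sigma_def transpose_add matrix_transpose_mul symQ)
  show "pdm (ac_Sigma X Q)"
    unfolding pdm_def
  proof (intro allI impI)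
    fix x :: "real^'p" assume x: "x \<noteq> 0"
    show "0 < x \<bullet> (ac_Sigma X Q *v x)"
    proof (cases "pos_def_mat Q")
      case True
      then have "0 < x \<bullet> (Q *v x)" using x by (simp add: pos_def_mat_def)
      then show ?thesis by (simp add: Sigma_quad add_nonneg_pos)
    next
      case False
      then have Q0: "Q = 0" using Q by simp
      have "X *v x \<noteq> 0"
      proof
        assume Xx: "X *v x = 0"
        obtain k where k: "x$k \<noteq> 0" using x by (auto simp: vec_eq_iff)
        let ?L = "probit_post X Y Q v"
        have inv: "?L (b + t *\<^sub>R x) = ?L b" for b t
        proof -
          have "X$i \<bullet> (b + t *\<^sub>R x) = X$i \<bullet> b" for i
            using Xx by (simp add: inner_add_right row_inner vec_eq_iff)
          then show ?thesis unfolding post_eq[OF Y01] by (simp add: Q0)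
        qed
        have "(\<integral>\<^sup>+b. ennreal (?L b) \<partial>lborel) = \<infinity>"
          by (rule nn_infinite[OF post_borel post_pos[OF Y01] k inv])
        moreover have "(\<integral>\<^sup>+b. ennreal (norm (?L b)) \<partial>lborel) < \<infinity>"
          using proper by (simp add: integrable_iff_bounded)
        moreover have "norm (?L b) = ?L b" for b using post_pos[OF Y01, of X Q v b] by simp
        ultimately show False by simp
      qed
      then have "0 < (X *v x) \<bullet> (X *v x)" by simp
      then show ?thesis by (simp add: Sigma_quad Q0)
    qed
  qed
qed

definition TT :: "('n::finite \<Rightarrow> real) \<Rightarrow> ('n \<Rightarrow> real) \<Rightarrow> real^'n \<Rightarrow> real" where
  "TT a y z = (\<Prod>i\<in>UNIV. tn_density (a i) (y i) (z$i))"

lemma TT_borel[measurable]: "TT a y \<in> borel_measurable borel"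
  unfolding TT_def[abs_def] by measurable

lemma TT_nonneg: "0 \<le> TT a y z"
  unfolding TT_def by (intro prod_nonneg) (simp add: tn_nonneg)

lemma TT_int: "integrable lborel (TT a y)" "(\<integral>z. TT a y z \<partial>lborel) = 1"
  unfolding TT_def[abs_def]
  using vec_integral_prod[of "\<lambda>i. tn_density (a i) (y i)"] tn_int by auto

lemma prod_sel:
  fixes f g :: "'n::finite \<Rightarrow> real"
  shows "(\<Prod>i\<in>UNIV. if i = j then f i else g i) = f j * (\<Prod>i\<in>UNIV - {j}. g i)"
proof -
  have "(\<Prod>i\<in>UNIV. if i = j then f i else g i) = (if j = j then f j else g j) * (\<Prod>i\<in>UNIV - {j}. if i = j then f i else g i)"
    by (rule prod.remove) auto
  also have "(\<Prod>i\<in>UNIV - {j}. if i = j then f i else g i) = (\<Prod>i\<in>UNIV - {j}. g i)"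
    by (intro prod.cong) auto
  finally show ?thesis by simp
qed

lemma TT_coord_gen:
  fixes a y :: "'n::finite \<Rightarrow> real"
  assumes gi: "integrable lborel (\<lambda>u. h u * tn_density (a j) (y j) u)"
  shows "integrable lborel (\<lambda>z. TT a y z * h (z$j))"
    "(\<integral>z. TT a y z * h (z$j) \<partial>lborel) = (\<integral>u. h u * tn_density (a j) (y j) u \<partial>lborel)"
proof -
  define g where "g = (\<lambda>i u. if i = j then h u * tn_density (a i) (y i) u else tn_density (a i) (y i) u)"
  have ig: "integrable lborel (g i)" for i
    using gi tn_int(1)[of "a i" "y i"] by (cases "i = j") (simp_all add: g_def)
  have eq: "(\<Prod>i\<in>UNIV. g i (z$i)) = TT a y z * h (z$j)" for z
  proof -
    have "(\<Prod>i\<in>UNIV. g i (z$i)) = (h (z$j) * tn_density (a j) (y j) (z$j)) * (\<Prod>i\<in>UNIV - {j}. tn_density (a i) (y i) (z$i))"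
      unfolding g_def by (rule prod_sel)
    also have "\<dots> = h (z$j) * TT a y z"
      unfolding TT_def by (simp add: prod.remove[of UNIV j] mult_ac)
    finally show ?thesis by simp
  qed
  have ie: "(\<Prod>i\<in>UNIV. integral\<^sup>L lborel (g i)) = (\<integral>u. h u * tn_density (a j) (y j) u \<partial>lborel)"
  proof -
    have "(\<Prod>i\<in>UNIV. integral\<^sup>L lborel (g i)) = (\<Prod>i\<in>UNIV. if i = j then (\<integral>u. h u * tn_density (a j) (y j) u \<partial>lborel) else 1)"
    proof (intro prod.cong refl)
      fix i show "integral\<^sup>L lborel (g i) = (if i = j then (\<integral>u. h u * tn_density (a j) (y j) u \<partial>lborel) else 1)"
        using tn_int(2)[of "a i" "y i"] by (cases "i = j") (simp_all add: g_def)
    qed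
    also have "\<dots> = (\<integral>u. h u * tn_density (a j) (y j) u \<partial>lborel)"
      by (simp add: prod_sel)
    finally show ?thesis .
  qed
  show "integrable lborel (\<lambda>z. TT a y z * h (z$j))"
    using vec_integral_prod(1)[of g, OF ig] by (simp add: eq)
  show "(\<integral>z. TT a y z * h (z$j) \<partial>lborel) = (\<integral>u. h u * tn_density (a j) (y j) u \<partial>lborel)"
    using vec_integral_prod(2)[of g, OF ig] by (simp add: eq ie)
qed

lemma TT_coord: "integrable lborel (\<lambda>z. TT a y z * z$j)" "(\<integral>z. TT a y z * z$j \<partial>lborel) = a j + rr (a j) (y j)"
  using TT_coord_gen[where h="\<lambda>u. u" and a=a and y=y and j=j] tn_mean by auto

lemma TT_abs: "integrable lborel (\<lambda>z. TT a y z * \<bar>z$j\<bar>)"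
  using TT_coord_gen(1)[where h="\<lambda>u. \<bar>u\<bar>" and a=a and y=y and j=j] tn_abs by auto

lemma TT_norm: "integrable lborel (\<lambda>z::real^'n::finite. TT a y z * norm z)"
proof -
  have i: "integrable lborel (\<lambda>z. \<Sum>j\<in>UNIV. TT a y z * \<bar>z$j\<bar>)"
    by (intro Bochner_Integration.integrable_sum TT_abs)
  show ?thesis
  proof (rule Bochner_Integration.integrable_bound[OF i])
    show "(\<lambda>z. TT a y z * norm z) \<in> borel_measurable lborel" by measurable
    show "AE z in lborel. norm (TT a y z * norm z) \<le> norm (\<Sum>j\<in>UNIV. TT a y z * \<bar>z$j\<bar>)"
    proof (rule AE_I2)
      fix z :: "real^'n"
      have "TT a y z * norm z \<le> TT a y z * (\<Sum>j\<in>UNIV. \<bar>z$j\<bar>)"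
        by (rule mult_left_mono[OF norm_le_l1_cart TT_nonneg])
      then show "norm (TT a y z * norm z) \<le> norm (\<Sum>j\<in>UNIV. TT a y z * \<bar>z$j\<bar>)"
        using TT_nonneg[of a y z] by (simp add: sum_distrib_left sum_nonneg)
    qed
  qed
qed

lemma TT_vec: "integrable lborel (\<lambda>z::real^'n::finite. TT a y z *\<^sub>R z)" "(\<integral>z. TT a y z *\<^sub>R z \<partial>lborel) = (\<chi> j. a j + rr (a j) (y j))"
proof -
  have eq: "TT a y z *\<^sub>R z = (\<Sum>j\<in>UNIV. (TT a y z * z$j) *\<^sub>R axis j 1)" for z :: "real^'n"
  proof -
    have "TT a y z *\<^sub>R z = TT a y z *\<^sub>R (\<Sum>j\<in>UNIV. z$j *\<^sub>R axis j 1)"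
      using basis_expansion[of z] by (simp add: scalar_mult_eq_scaleR)
    also have "\<dots> = (\<Sum>j\<in>UNIV. (TT a y z * z$j) *\<^sub>R axis j 1)"
      by (simp add: scaleR_sum_right)
    finally show ?thesis .
  qed
  show "integrable lborel (\<lambda>z. TT a y z *\<^sub>R z)"
    unfolding eq by (intro Bochner_Integration.integrable_sum integrable_scaleR_left TT_coord)
  have "(\<integral>z. TT a y z *\<^sub>R z \<partial>lborel) = (\<Sum>j\<in>UNIV. (\<integral>z. (TT a y z * z$j) *\<^sub>R axis j 1 \<partial>lborel))"
    unfolding eq by (intro Bochner_Integration.integral_sum integrable_scaleR_left TT_coord)
  also have "\<dots> = (\<Sum>j\<in>UNIV. (a j + rr (a j) (y j)) *\<^sub>R axis j 1)"
    by (intro sum.cong refl) (simp add: TT_coord)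
  also have "\<dots> = (\<chi> j. a j + rr (a j) (y j))"
    using basis_expansion[of "\<chi> j. a j + rr (a j) (y j)"] by (simp add: scalar_mult_eq_scaleR)
  finally show "(\<integral>z. TT a y z *\<^sub>R z \<partial>lborel) = (\<chi> j. a j + rr (a j) (y j))" .
qed

lemma mvn_bound:
  fixes S :: "real^'p^'p"
  assumes "symm S" "pdm S"
  shows "mvn_prec_density m S x \<le> (2 * pi) powr (- real CARD('p) / 2) * sqrt (det S)"
proof -
  have "0 \<le> (x - m) \<bullet> (S *v (x - m))"
    using assms(2) by (cases "x - m = 0") (auto simp: pdm_def less_imp_le)
  then have "exp (- ((x - m) \<bullet> (S *v (x - m))) / 2) \<le> 1" by simp
  then show ?thesis unfolding mvn_prec_density_def
    using gauss_pd(1)[OF assms] by (intro mult_left_le) auto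
qed

theorem proposition3:
  fixes X :: "real^'p^'n" and Y :: "'n \<Rightarrow> real" and Q :: "real^'p^'p"
    and v :: "real^'p" and B :: "real^'p"
  assumes Y01: "\<forall>i. Y i \<in> {0, 1}"
    and Q: "pos_def_mat Q \<or> Q = 0"
    and proper: "integrable lborel (probit_post X Y Q v)"
    and mode: "\<forall>beta. probit_post X Y Q v beta \<le> probit_post X Y Q v B"
  shows "integrable lborel (\<lambda>beta. ac_kernel X Y Q v B beta *\<^sub>R beta)
    \<and> (\<integral>beta. ac_kernel X Y Q v B beta *\<^sub>R beta \<partial>lborel) = B"
proof -
  define S where "S = ac_Sigma X Q"
  have sS: "symm S" and pS: "pdm S" and symQ: "transpose Q = Q"
    using Sigma_sp[OF Y01 Q proper] by (auto simp: S_def)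
  have dS: "0 < det S" by (rule gauss_pd(1)[OF sS pS])
  define a where "a = (\<lambda>i. X$i \<bullet> B)"
  define T where "T = TT a Y"
  define Si where "Si = matrix_inv S"
  define c1 where "c1 = Si *v (Q *v v)"
  define M where "M = (\<lambda>z. Si *v (transpose X *v z + Q *v v))"
  have Meq: "M z = (Si ** transpose X) *v z + c1" for z
    by (simp only: M_def c1_def matrix_vector_right_distrib matrix_vector_mul_assoc)
  define N where "N = (\<lambda>z b. mvn_prec_density (M z) S b)"
  define c where "c = (2 * pi) powr (- real CARD('p) / 2) * sqrt (det S)"
  have kern: "ac_kernel X Y Q v B b = (\<integral>z. T z * N z b \<partial>lborel)" for b
    by (simp add: ac_kernel_def T_def TT_def N_def M_def S_def Si_def a_def)
  have Tnn: "0 \<le> T z" for z by (simp add: T_def TT_nonneg)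
  have Nnn: "0 \<le> N z b" for z b by (simp add: N_def mvn_nonneg[OF sS pS])
  have Nle: "N z b \<le> c" for z b using mvn_bound[OF sS pS, of "M z" b] by (simp add: N_def c_def)
  have [measurable]: "T \<in> borel_measurable borel" by (simp add: T_def)
  have [measurable]: "(\<lambda>p. N (fst p) (snd p)) \<in> borel_measurable (lborel \<Otimes>\<^sub>M lborel)"
    unfolding N_def Meq mvn_prec_density_def by measurable
  obtain K where K: "\<And>z. norm ((Si ** transpose X) *v z) \<le> norm z * K"
    using bounded_linear.bounded[OF matrix_vector_mul_bounded_linear[of "Si ** transpose X"]] by blast
  have normM: "norm (M z) \<le> norm z * K + norm c1" for z
    using K[of z] norm_triangle_ineq[of "(Si ** transpose X) *v z" c1] by (simp add: Meq)
  define G where "G = (\<lambda>p::((real^'n) \<times> (real^'p)). (T (fst p) * N (fst p) (snd p)) *\<^sub>R snd p)"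
  have Gm[measurable]: "G \<in> borel_measurable (lborel \<Otimes>\<^sub>M lborel)"
    unfolding G_def by measurable
  have Gz: "G (z, b) = T z *\<^sub>R (mvn_prec_density (M z) S b *\<^sub>R b)" for z b
    by (simp add: G_def N_def)
  have int_in: "integrable lborel (\<lambda>b. G (z, b))" for z
    unfolding Gz by (intro integrable_scaleR_right mvn_mean(1)[OF sS pS])
  have val_in: "(\<integral>b. G (z, b) \<partial>lborel) = T z *\<^sub>R M z" for z
  proof -
    have "(\<integral>b. G (z, b) \<partial>lborel) = (\<integral>b. T z *\<^sub>R (mvn_prec_density (M z) S b *\<^sub>R b) \<partial>lborel)"
      by (simp only: Gz)
    also have "\<dots> = T z *\<^sub>R (\<integral>b. mvn_prec_density (M z) S b *\<^sub>R b \<partial>lborel)"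
      by (rule integral_scaleR_right)
    also have "\<dots> = T z *\<^sub>R M z" by (simp only: mvn_mean(2)[OF sS pS])
    finally show ?thesis .
  qed
  have norm_in: "(\<integral>b. norm (G (z, b)) \<partial>lborel) \<le> T z * (norm z * K + norm c1 + C0 S)" for z
  proof -
    have "(\<integral>b. norm (G (z, b)) \<partial>lborel) = (\<integral>b. T z * (mvn_prec_density (M z) S b * norm b) \<partial>lborel)"
      by (intro Bochner_Integration.integral_cong) (auto simp: Gz Tnn mvn_nonneg[OF sS pS] abs_mult)
    also have "\<dots> = T z * (\<integral>b. mvn_prec_density (M z) S b * norm b \<partial>lborel)"
      by simp
    also have "\<dots> \<le> T z * (norm (M z) + C0 S)"
      by (intro mult_left_mono mvn_norm(2)[OF sS pS] Tnn)
    also have "\<dots> \<le> T z * (norm z * K + norm c1 + C0 S)"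
      by (intro mult_left_mono Tnn) (use normM[of z] in simp)
    finally show ?thesis .
  qed
  have intG: "integrable (lborel \<Otimes>\<^sub>M lborel) G"
  proof (rule lborel_pair.Fubini_integrable[OF Gm])
    have i: "integrable lborel (\<lambda>z. K * (T z * norm z) + (norm c1 + C0 S) * T z)"
      using TT_norm[of a Y] TT_int(1)[of a Y] by (auto simp: T_def)
    show "integrable lborel (\<lambda>z. \<integral>b. norm (G (z, b)) \<partial>lborel)"
    proof (rule Bochner_Integration.integrable_bound[OF i])
      show "(\<lambda>z. \<integral>b. norm (G (z, b)) \<partial>lborel) \<in> borel_measurable lborel"
        by (rule lborel.borel_measurable_lebesgue_integral) (simp add: case_prod_beta')
      show "AE z in lborel. norm (\<integral>b. norm (G (z, b)) \<partial>lborel) \<le> norm (K * (T z * norm z) + (norm c1 + C0 S) * T z)"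
      proof (rule AE_I2)
        fix z
        have "0 \<le> (\<integral>b. norm (G (z, b)) \<partial>lborel)" by simp
        moreover have "T z * (norm z * K + norm c1 + C0 S) = K * (T z * norm z) + (norm c1 + C0 S) * T z"
          by (simp add: algebra_simps)
        ultimately show "norm (\<integral>b. norm (G (z, b)) \<partial>lborel) \<le> norm (K * (T z * norm z) + (norm c1 + C0 S) * T z)"
          using norm_in[of z] by simp
      qed
    qed
    show "AE z in lborel. integrable lborel (\<lambda>b. G (z, b))" using int_in by simp
  qed
  have intG': "integrable (lborel \<Otimes>\<^sub>M lborel) (\<lambda>(b, z). G (z, b))"
    by (rule lborel_pair.integrable_product_swap[OF intG])
  have kern_eq: "ac_kernel X Y Q v B b *\<^sub>R b = (\<integral>z. G (z, b) \<partial>lborel)" for b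
  proof -
    have iz: "integrable lborel (\<lambda>z. T z * N z b)"
    proof (rule Bochner_Integration.integrable_bound)
      show "integrable lborel (\<lambda>z. c * T z)" using TT_int(1)[of a Y] by (simp add: T_def)
      show "(\<lambda>z. T z * N z b) \<in> borel_measurable lborel" unfolding N_def Meq mvn_prec_density_def by measurable
      show "AE z in lborel. norm (T z * N z b) \<le> norm (c * T z)"
      proof (rule AE_I2)
        fix z
        have "T z * N z b \<le> T z * c" by (rule mult_left_mono[OF Nle Tnn])
        moreover have "0 \<le> c" using Nnn[of z b] Nle[of z b] by linarith
        ultimately show "norm (T z * N z b) \<le> norm (c * T z)"
          using Tnn[of z] Nnn[of z b] by (simp add: abs_mult mult.commute)
      qed
    qed
    have "ac_kernel X Y Q v B b *\<^sub>R b = (\<integral>z. (T z * N z b) *\<^sub>R b \<partial>lborel)"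
      unfolding kern using iz by (simp add: integral_scaleR_left)
    then show ?thesis by (simp add: G_def)
  qed
  have int_out: "integrable lborel (\<lambda>b. ac_kernel X Y Q v B b *\<^sub>R b)"
    unfolding kern_eq using lborel_pair.integrable_fst'[OF intG'] by simp
  have "(\<integral>b. ac_kernel X Y Q v B b *\<^sub>R b \<partial>lborel) = (\<integral>b. (\<integral>z. G (z, b) \<partial>lborel) \<partial>lborel)"
    by (simp add: kern_eq)
  also have "\<dots> = integral\<^sup>L (lborel \<Otimes>\<^sub>M lborel) (\<lambda>(b, z). G (z, b))"
    using lborel_pair.integral_fst'[OF intG'] by simp
  also have "\<dots> = integral\<^sup>L (lborel \<Otimes>\<^sub>M lborel) G"
    by (rule lborel_pair.integral_product_swap[OF Gm])
  also have "\<dots> = (\<integral>z. (\<integral>b. G (z, b) \<partial>lborel) \<partial>lborel)"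
    using lborel_pair.integral_fst'[OF intG] by simp
  also have "\<dots> = (\<integral>z. T z *\<^sub>R M z \<partial>lborel)"
    by (simp add: val_in)
  also have "\<dots> = B"
  proof -
    define mu where "mu = (\<chi> j. a j + rr (a j) (Y j))"
    have iv: "integrable lborel (\<lambda>z. T z *\<^sub>R z)" using TT_vec(1)[of a Y] by (simp add: T_def)
    have it: "integrable lborel T" using TT_int(1)[of a Y] by (simp add: T_def)
    have eqz: "T z *\<^sub>R M z = (Si ** transpose X) *v (T z *\<^sub>R z) + T z *\<^sub>R c1" for z
      by (simp add: Meq scaleR_add_right mv_scaleR)
    have "(\<integral>z. T z *\<^sub>R M z \<partial>lborel) = (\<integral>z. (Si ** transpose X) *v (T z *\<^sub>R z) \<partial>lborel) + (\<integral>z. T z *\<^sub>R c1 \<partial>lborel)"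
      unfolding eqz
      by (rule Bochner_Integration.integral_add)
         (auto intro: integrable_bounded_linear[OF matrix_vector_mul_bounded_linear iv] it)
    also have "(\<integral>z. (Si ** transpose X) *v (T z *\<^sub>R z) \<partial>lborel) = (Si ** transpose X) *v mu"
      using integral_bounded_linear[OF matrix_vector_mul_bounded_linear iv] TT_vec(2)[of a Y]
      by (simp add: T_def mu_def)
    also have "(\<integral>z. T z *\<^sub>R c1 \<partial>lborel) = c1"
      using TT_int(2)[of a Y] it by (simp add: T_def)
    also have "(Si ** transpose X) *v mu + c1 = Si *v (S *v B)"
    proof -
      have foc': "transpose X *v (\<chi> i. rr (X$i \<bullet> B) (Y i)) = Q *v (B - v)"
        by (rule foc[OF Y01 symQ mode])
      have mu_eq: "mu = X *v B + (\<chi> i. rr (X$i \<bullet> B) (Y i))"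
        by (simp add: mu_def a_def vec_eq_iff row_inner)
      have "transpose X *v mu + Q *v v = S *v B"
        unfolding mu_eq matrix_vector_right_distrib foc'
        by (simp add: S_def ac_Sigma_def matrix_vector_mult_add_rdistrib matrix_vector_mul_assoc
            matrix_vector_right_distrib matrix_vector_mult_diff_distrib algebra_simps)
      then show ?thesis
        by (simp add: c1_def matrix_vector_mul_assoc[symmetric] matrix_vector_right_distrib[symmetric])
    qed
    also have "Si *v (S *v B) = B"
      using matrix_inv_left[of S] dS by (simp add: Si_def matrix_vector_mul_assoc)
    finally show ?thesis .
  qed
  finally show ?thesis using int_out by simp
qed

end
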